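(* Let $\Gamma$ be a Lie group with a left invariant metric, $\Gamma_0\triangleleft\Gamma$ the connected component of the identity, $\Gamma_i$ a sequence of discrete groups, and $f_i:\Gamma_i\to\Gamma$ a clean discrete approximation. Let $r>0$ be such that $B_e(r,\Gamma)\subset\Gamma_0$, and for each $i$ let $G_i\leq\Gamma_i$ be the subgroup generated by $f_i^{-1}(B_e(r,\Gamma))$. Then for large enough $i$ there is a surjective group morphism $\Gamma_i/G_i\to\Gamma/\Gamma_0$.
   Context: A sequence $f_i:\Gamma_i\to\Gamma$ is a discrete approximation if there is $R_0>0$ such that for large $i$, $f_i^{-1}(B_e(R_0,\Gamma))$ generates $\Gamma_i$ and contains the identity, and for every $R,\varepsilon>0$ there is $i_0$ with, for $i\geq i_0$: $f_i^{-1}(B_e(R,\Gamma))$ is finite; $f_i(\Gamma_i)$ meets each $\varepsilon$-ball centered in $B_e(R,\Gamma)$; and $d(f_i(g_1g_2^{-1}),f_i(g_1)f_i(g_2^{-1}))\leq\varepsilon$ for $g_1,g_2\in f_i^{-1}(B_e(R,\Gamma))$. (For large $i$ the subgroup $G_i$ is normal in $\Gamma_i$, so $\Gamma_i/G_i$ is a group.) A generating subset $S$ of a group $G$ containing the identity is a determining set if $G$ has a presentation $\langle S\mid\mathcal{R}\rangle$ with all relators words of length $3$ in $S\cup S^{-1}$. The approximation is clean if there are an open generating set $S_0\subset\Gamma$, a compact $K_0\subset\Gamma$, and for large $i$ symmetric determining sets $S_i\subset\Gamma_i$ with $f_i^{-1}(S_0)\subset S_i\subset f_i^{-1}(K_0)$.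 *)

theory Defs
  imports "HOL-Analysis.Analysis" "HOL-Algebra.Coset" "HOL-Algebra.Generated_Groups"
begin

primrec Ck_on :: "nat \<Rightarrow> 'a::euclidean_space set \<Rightarrow> ('a \<Rightarrow> 'b::euclidean_space) \<Rightarrow> bool" where
  "Ck_on 0 S f = continuous_on S f"
| "Ck_on (Suc k) S f =
     ((\<forall>x\<in>S. f differentiable (at x)) \<and>
      (\<forall>i\<in>Basis. Ck_on k S (\<lambda>x. frechet_derivative f (at x) i)))"

definition Cinf_on :: "'a::euclidean_space set \<Rightarrow> ('a \<Rightarrow> 'b::euclidean_space) \<Rightarrow> bool" where
  "Cinf_on S f \<longleftrightarrow> open S \<and> (\<forall>k. Ck_on k S f)"

definition is_chart :: "('g::metric_space) set \<Rightarrow> ('g \<Rightarrow> 'e::euclidean_space) \<Rightarrow> bool" where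
  "is_chart U \<phi> \<longleftrightarrow> open U \<and> inj_on \<phi> U \<and> open (\<phi> ` U) \<and>
     continuous_on U \<phi> \<and> continuous_on (\<phi> ` U) (inv_into U \<phi>)"

definition smooth_atlas :: "('g::metric_space set \<times> ('g \<Rightarrow> 'e::euclidean_space)) set \<Rightarrow> bool" where
  "smooth_atlas A \<longleftrightarrow>
     (\<forall>(U,\<phi>)\<in>A. is_chart U \<phi>) \<and> (\<Union>(U,\<phi>)\<in>A. U) = UNIV \<and>
     (\<forall>(U,\<phi>)\<in>A. \<forall>(V,\<psi>)\<in>A. Cinf_on (\<phi> ` (U \<inter> V)) (\<psi> \<circ> inv_into U \<phi>))"

definition lie_group_modelled_on :: "'e::euclidean_space itself \<Rightarrow> ('g::metric_space) monoid \<Rightarrow> bool" where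
  "lie_group_modelled_on _ \<Gamma> \<longleftrightarrow>
     group \<Gamma> \<and> carrier \<Gamma> = UNIV \<and>
     continuous_on UNIV (\<lambda>(x,y). x \<otimes>\<^bsub>\<Gamma>\<^esub> y) \<and>
     continuous_on UNIV (\<lambda>x. inv\<^bsub>\<Gamma>\<^esub> x) \<and>
     (\<exists>A :: ('g set \<times> ('g \<Rightarrow> 'e)) set. smooth_atlas A \<and>
        (\<forall>(U1,\<phi>1)\<in>A. \<forall>(U2,\<phi>2)\<in>A. \<forall>(V,\<psi>)\<in>A.
           Cinf_on {(a,b). a \<in> \<phi>1 ` U1 \<and> b \<in> \<phi>2 ` U2 \<and>
                        inv_into U1 \<phi>1 a \<otimes>\<^bsub>\<Gamma>\<^esub> inv_into U2 \<phi>2 b \<in> V}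
                   (\<lambda>(a,b). \<psi> (inv_into U1 \<phi>1 a \<otimes>\<^bsub>\<Gamma>\<^esub> inv_into U2 \<phi>2 b))) \<and>
        (\<forall>(U,\<phi>)\<in>A. \<forall>(V,\<psi>)\<in>A.
           Cinf_on {a. a \<in> \<phi> ` U \<and> inv\<^bsub>\<Gamma>\<^esub> (inv_into U \<phi> a) \<in> V}
                   (\<lambda>a. \<psi> (inv\<^bsub>\<Gamma>\<^esub> (inv_into U \<phi> a)))))"

text \<open>Zero-dimensional Lie group: a group carried by the whole type with the discrete topology.\<close>
definition discrete_lie_group :: "('g::metric_space) monoid \<Rightarrow> bool" where
  "discrete_lie_group \<Gamma> \<longleftrightarrow> group \<Gamma> \<and> carrier \<Gamma> = UNIV \<and> (\<forall>x::'g. open {x})"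

text \<open>Lie group: either zero-dimensional, or modelled on the Euclidean space 'e
  (in the theorem 'e is a free type variable, hence arbitrary; this covers all dimensions \<ge> 1).\<close>
definition lie_group :: "'e::euclidean_space itself \<Rightarrow> ('g::metric_space) monoid \<Rightarrow> bool" where
  "lie_group E \<Gamma> \<longleftrightarrow> discrete_lie_group \<Gamma> \<or> lie_group_modelled_on E \<Gamma>"

definition left_invariant_metric :: "('g::metric_space) monoid \<Rightarrow> bool" where
  "left_invariant_metric \<Gamma> \<longleftrightarrow>
     (\<forall>g\<in>carrier \<Gamma>. \<forall>x\<in>carrier \<Gamma>. \<forall>y\<in>carrier \<Gamma>. dist (g \<otimes>\<^bsub>\<Gamma>\<^esub> x) (g \<otimes>\<^bsub>\<Gamma>\<^esub> y) = dist x y)"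

definition discrete_approximation ::
  "(nat \<Rightarrow> 'a monoid) \<Rightarrow> ('g::metric_space) monoid \<Rightarrow> (nat \<Rightarrow> 'a \<Rightarrow> 'g) \<Rightarrow> bool" where
  "discrete_approximation \<Gamma>s \<Gamma> f \<longleftrightarrow>
     (\<exists>R0>0. \<forall>\<^sub>F i in sequentially.
        generate (\<Gamma>s i) (f i -` ball \<one>\<^bsub>\<Gamma>\<^esub> R0 \<inter> carrier (\<Gamma>s i)) = carrier (\<Gamma>s i) \<and>
        \<one>\<^bsub>\<Gamma>s i\<^esub> \<in> f i -` ball \<one>\<^bsub>\<Gamma>\<^esub> R0) \<and>
     (\<forall>R>0. \<forall>\<epsilon>>0. \<forall>\<^sub>F i in sequentially.
        finite (f i -` ball \<one>\<^bsub>\<Gamma>\<^esub> R \<inter> carrier (\<Gamma>s i)) \<and>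
        (\<forall>x\<in>ball \<one>\<^bsub>\<Gamma>\<^esub> R. \<exists>g\<in>carrier (\<Gamma>s i). f i g \<in> ball x \<epsilon>) \<and>
        (\<forall>g1\<in>f i -` ball \<one>\<^bsub>\<Gamma>\<^esub> R \<inter> carrier (\<Gamma>s i).
         \<forall>g2\<in>f i -` ball \<one>\<^bsub>\<Gamma>\<^esub> R \<inter> carrier (\<Gamma>s i).
           dist (f i (g1 \<otimes>\<^bsub>\<Gamma>s i\<^esub> inv\<^bsub>\<Gamma>s i\<^esub> g2))
                (f i g1 \<otimes>\<^bsub>\<Gamma>\<^esub> f i (inv\<^bsub>\<Gamma>s i\<^esub> g2)) \<le> \<epsilon>))"

text \<open>Words in the letters S \<union> S^{-1}: a letter (s, True) stands for s, (s, False) for s^{-1}.\<close>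
definition word_eval :: "('a, 'b) monoid_scheme \<Rightarrow> ('a \<times> bool) list \<Rightarrow> 'a" where
  "word_eval G w = foldr (\<lambda>(s,b) acc. (if b then s else inv\<^bsub>G\<^esub> s) \<otimes>\<^bsub>G\<^esub> acc) w \<one>\<^bsub>G\<^esub>"

text \<open>The congruence on words generated by free reduction and by the relators R;
  its classes are the elements of the presented group \<langle>S | R\<rangle>.\<close>
inductive_set word_congruence :: "('a \<times> bool) list set \<Rightarrow> (('a \<times> bool) list \<times> ('a \<times> bool) list) set"
  for R where
  wc_refl: "(w, w) \<in> word_congruence R"
| wc_sym: "(w, v) \<in> word_congruence R \<Longrightarrow> (v, w) \<in> word_congruence R"
| wc_trans: "(u, v) \<in> word_congruence R \<Longrightarrow> (v, w) \<in> word_congruence R \<Longrightarrow> (u, w) \<in> word_congruence R"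
| wc_free: "(u @ [(s, b), (s, \<not> b)] @ v, u @ v) \<in> word_congruence R"
| wc_rel: "r \<in> R \<Longrightarrow> (u @ r @ v, u @ v) \<in> word_congruence R"

text \<open>G has the presentation \<langle>S | R\<rangle> (via the inclusion S \<subseteq> G): S generates G, the relators
  hold in G, and the kernel of the evaluation map from words is exactly the normal closure of R.\<close>
definition has_presentation :: "('a, 'b) monoid_scheme \<Rightarrow> 'a set \<Rightarrow> ('a \<times> bool) list set \<Rightarrow> bool" where
  "has_presentation G S R \<longleftrightarrow>
     S \<subseteq> carrier G \<and> generate G S = carrier G \<and>
     (\<forall>r\<in>R. set r \<subseteq> S \<times> UNIV \<and> word_eval G r = \<one>\<^bsub>G\<^esub>) \<and>
     (\<forall>w v. set w \<subseteq> S \<times> UNIV \<longrightarrow> set v \<subseteq> S \<times> UNIV \<longrightarrow>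
        word_eval G w = word_eval G v \<longrightarrow> (w, v) \<in> word_congruence R)"

definition determining_set :: "('a, 'b) monoid_scheme \<Rightarrow> 'a set \<Rightarrow> bool" where
  "determining_set G S \<longleftrightarrow>
     S \<subseteq> carrier G \<and> \<one>\<^bsub>G\<^esub> \<in> S \<and> generate G S = carrier G \<and>
     (\<exists>R. (\<forall>r\<in>R. length r = 3) \<and> has_presentation G S R)"

definition symmetric_subset :: "('a, 'b) monoid_scheme \<Rightarrow> 'a set \<Rightarrow> bool" where
  "symmetric_subset G S \<longleftrightarrow> (\<forall>s\<in>S. inv\<^bsub>G\<^esub> s \<in> S)"

definition clean_discrete_approximation ::
  "(nat \<Rightarrow> 'a monoid) \<Rightarrow> ('g::metric_space) monoid \<Rightarrow> (nat \<Rightarrow> 'a \<Rightarrow> 'g) \<Rightarrow> bool" where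
  "clean_discrete_approximation \<Gamma>s \<Gamma> f \<longleftrightarrow>
     discrete_approximation \<Gamma>s \<Gamma> f \<and>
     (\<exists>S0 K0. open S0 \<and> S0 \<subseteq> carrier \<Gamma> \<and> generate \<Gamma> S0 = carrier \<Gamma> \<and> compact K0 \<and>
        (\<forall>\<^sub>F i in sequentially. \<exists>S.
            symmetric_subset (\<Gamma>s i) S \<and> determining_set (\<Gamma>s i) S \<and>
            f i -` S0 \<inter> carrier (\<Gamma>s i) \<subseteq> S \<and> S \<subseteq> f i -` K0 \<inter> carrier (\<Gamma>s i)))"

end

theory Submission
  imports Defs
begin


locale lgm = group G for G :: "('g::metric_space, 'b) monoid_scheme" (structure) +
  assumes carr: "carrier G = UNIV"
    and linv: "\<And>g x y. dist (g \<otimes> x) (g \<otimes> y) = dist x y"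
    and cmul: "continuous_on UNIV (\<lambda>(x,y). x \<otimes> y)"
    and cinv: "continuous_on UNIV (\<lambda>x. inv x)"
    and lconn: "\<And>x::'g. \<exists>V. open V \<and> connected V \<and> x \<in> V"
begin

abbreviation "H0 \<equiv> connected_component_set UNIV \<one>"

lemma inC[simp]: "x \<in> carrier G" by (simp add: carr)

lemma cont_mult: "continuous_on S F \<Longrightarrow> continuous_on S F2 \<Longrightarrow> continuous_on S (\<lambda>x. F x \<otimes> F2 x)"
proof -
  assume a: "continuous_on S F" "continuous_on S F2"
  have "continuous_on S (\<lambda>x. (F x, F2 x))" using a by (intro continuous_on_Pair)
  from continuous_on_compose[OF this continuous_on_subset[OF cmul]]
  show ?thesis by (simp add: o_def)
qed

lemma cont_inv: "continuous_on S F \<Longrightarrow> continuous_on S (\<lambda>x. inv (F x))"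
  using continuous_on_compose[of S F, OF _ continuous_on_subset[OF cinv]] by (simp add: o_def)

lemma dist_inv_e: "dist (inv u) \<one> = dist u \<one>"
proof -
  have "dist (inv u) \<one> = dist (u \<otimes> inv u) (u \<otimes> \<one>)" by (simp only: linv)
  then show ?thesis by (simp add: dist_commute)
qed

lemma dist_left: "dist (inv y \<otimes> x) \<one> = dist x y"
proof -
  have "dist (inv y \<otimes> x) (inv y \<otimes> y) = dist x y" by (rule linv)
  moreover have "inv y \<otimes> y = \<one>" by simp
  ultimately show ?thesis by simp
qed

lemma dist_mult_right_e: "dist (a \<otimes> q) a = dist q \<one>"
proof -
  have "dist (a \<otimes> q) (a \<otimes> \<one>) = dist q \<one>" by (rule linv)
  then show ?thesis by simp
qed

lemma comp_sub: assumes "connected T" "y \<in> T" "y \<in> H0" shows "T \<subseteq> H0"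
proof -
  have "T \<subseteq> connected_component_set UNIV y" by (rule connected_component_maximal[OF assms(2,1)]) simp
  also have "\<dots> = H0" using connected_component_eq[OF assms(3)] .
  finally show ?thesis .
qed

lemma one_H0: "\<one> \<in> H0" unfolding mem_Collect_eq by (rule connected_component_refl) simp

lemma open_H0: "open H0"
proof (rule iffD2[OF open_subopen], rule ballI)
  fix x assume x: "x \<in> H0"
  obtain V where V: "open V" "connected V" "x \<in> V" using lconn[of x] by blast
  have "V \<subseteq> H0" by (rule comp_sub[OF V(2,3) x])
  then show "\<exists>T. open T \<and> x \<in> T \<and> T \<subseteq> H0" using V by (intro exI[of _ V]) simp
qed

lemma H0_mult: assumes "a \<in> H0" "b \<in> H0" shows "a \<otimes> b \<in> H0"
proof -
  have c: "continuous_on H0 (\<lambda>x. a \<otimes> x)" by (intro cont_mult continuous_intros)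
  have "(\<lambda>x. a \<otimes> x) ` H0 \<subseteq> H0"
    proof (rule comp_sub)
    show "connected ((\<lambda>x. a \<otimes> x) ` H0)" by (rule connected_continuous_image[OF c]) simp
    show "a \<in> (\<lambda>x. a \<otimes> x) ` H0" by (rule image_eqI[of _ _ \<one>]) simp_all
    show "a \<in> H0" by fact
  qed
  thus ?thesis using assms by auto
qed

lemma H0_inv: assumes "a \<in> H0" shows "inv a \<in> H0"
proof -
  have c: "continuous_on H0 (\<lambda>x. inv x)" by (intro cont_inv continuous_intros)
  have "(\<lambda>x. inv x) ` H0 \<subseteq> H0"
    proof (rule comp_sub)
    show "connected ((\<lambda>x. inv x) ` H0)" by (rule connected_continuous_image[OF c]) simp
    show "\<one> \<in> (\<lambda>x. inv x) ` H0" by (rule image_eqI[of _ _ \<one>]) simp_all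
    show "\<one> \<in> H0" by simp
  qed
  thus ?thesis using assms by auto
qed

lemma H0_conj: assumes "a \<in> H0" shows "g \<otimes> a \<otimes> inv g \<in> H0"
proof -
  have c: "continuous_on H0 (\<lambda>x. g \<otimes> x \<otimes> inv g)" by (intro cont_mult continuous_intros)
  have "(\<lambda>x. g \<otimes> x \<otimes> inv g) ` H0 \<subseteq> H0"
    proof (rule comp_sub)
    show "connected ((\<lambda>x. g \<otimes> x \<otimes> inv g) ` H0)" by (rule connected_continuous_image[OF c]) simp
    show "\<one> \<in> (\<lambda>x. g \<otimes> x \<otimes> inv g) ` H0" by (rule image_eqI[of _ _ \<one>]) simp_all
    show "\<one> \<in> H0" by simp
  qed
  thus ?thesis using assms by auto
qed

lemma H0_sub: "subgroup H0 G"
proof (rule subgroupI)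
  show "H0 \<subseteq> carrier G" by (simp add: carr)
  show "H0 \<noteq> {}" using one_H0 by blast
  show "\<And>a. a \<in> H0 \<Longrightarrow> inv a \<in> H0" by (rule H0_inv)
  show "\<And>a b. a \<in> H0 \<Longrightarrow> b \<in> H0 \<Longrightarrow> a \<otimes> b \<in> H0" by (rule H0_mult)
qed

lemma H0_normal: "H0 \<lhd> G"
  by (rule normal_invI[OF H0_sub], rule H0_conj)

end


lemma finite_pos_min: "finite A \<Longrightarrow> (\<forall>x\<in>A. (0::real) < g x) \<Longrightarrow> \<exists>m>0. \<forall>x\<in>A. m \<le> g x"
proof (induction A rule: finite_induct)
  case empty then show ?case by (intro exI[of _ 1]) simp
next
  case (insert a A)
  then obtain m where m: "m > 0" "\<forall>x\<in>A. m \<le> g x" by auto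
  show ?case using insert(4) m by (intro exI[of _ "min m (g a)"]) auto
qed

lemma dist_pair_le: "dist (a, b) (c, d) \<le> dist a c + dist b d"
  unfolding dist_Pair_Pair by (rule sqrt_sum_squares_le_sum) simp_all

context lgm
begin

lemma conj_unif:
  assumes K: "compact K" and eta: "\<eta> > 0"
  shows "\<exists>\<theta>>0. \<forall>\<beta>\<in>K. \<forall>w. dist w \<one> < \<theta> \<longrightarrow> dist (inv \<beta> \<otimes> w \<otimes> \<beta>) \<one> < \<eta>"
proof -
  define F where "F = (\<lambda>p::'g\<times>'g. inv (fst p) \<otimes> snd p \<otimes> fst p)"
  have cF: "continuous_on UNIV F" unfolding F_def
    by (intro cont_mult cont_inv continuous_intros)
  have "\<forall>c. \<exists>d>0. \<forall>p. dist p (c, \<one>) < d \<longrightarrow> dist (F p) \<one> < \<eta>"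
  proof
    fix c
    have Fc: "F (c, \<one>) = \<one>" unfolding F_def by simp
    from cF[unfolded continuous_on_iff] eta obtain d where
      "d > 0" "\<forall>p\<in>UNIV. dist p (c, \<one>) < d \<longrightarrow> dist (F p) (F (c, \<one>)) < \<eta>"
      by blast
    then show "\<exists>d>0. \<forall>p. dist p (c, \<one>) < d \<longrightarrow> dist (F p) \<one> < \<eta>" using Fc by auto
  qed
  then obtain d where d: "\<And>c. d c > 0" "\<And>c p. dist p (c, \<one>) < d c \<Longrightarrow> dist (F p) \<one> < \<eta>"
    by metis
  have cov: "K \<subseteq> (\<Union>c\<in>K. ball c (d c / 2))" using d(1) by force
  obtain C where C: "C \<subseteq> K" "finite C" "K \<subseteq> (\<Union>c\<in>C. ball c (d c / 2))"
    by (rule compactE_image[OF K _ cov]) auto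
  obtain m where m: "m > 0" "\<forall>c\<in>C. m \<le> d c / 2"
    using finite_pos_min[OF C(2), of "\<lambda>c. d c / 2"] d(1) by auto
  show ?thesis
  proof (intro exI[of _ m] conjI m(1) ballI allI impI)
    fix \<beta> w assume b: "\<beta> \<in> K" and w: "dist w \<one> < m"
    then obtain c where c: "c \<in> C" "dist c \<beta> < d c / 2" using C(3) by auto
    have "dist (\<beta>, w) (c, \<one>) \<le> dist \<beta> c + dist w \<one>" by (rule dist_pair_le)
    have e1: "dist \<beta> c < d c / 2" using c(2) by (simp only: dist_commute)
    have e2: "m \<le> d c / 2" using m(2) c(1) by blast
    note \<open>dist (\<beta>, w) (c, \<one>) \<le> dist \<beta> c + dist w \<one>\<close>
    also have "dist \<beta> c + dist w \<one> < d c" using e1 e2 w by linarith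
    finally have "dist (F (\<beta>, w)) \<one> < \<eta>" by (rule d(2))
    then show "dist (inv \<beta> \<otimes> w \<otimes> \<beta>) \<one> < \<eta>" by (simp add: F_def)
  qed
qed

lemma H0_gen:
  assumes "\<delta> > 0" shows "H0 \<subseteq> generate G (ball \<one> \<delta>)"
proof -
  define W where "W = generate G (ball \<one> \<delta>)"
  have sW: "subgroup W G" unfolding W_def by (rule generate_is_subgroup) (simp add: carr)
  have oW: "open W"
  proof (rule iffD2[OF open_subopen], rule ballI)
    fix w assume w: "w \<in> W"
    have "ball w \<delta> \<subseteq> W"
    proof
      fix y assume "y \<in> ball w \<delta>"
      then have "inv w \<otimes> y \<in> ball \<one> \<delta>" by (metis mem_ball dist_commute dist_left)
      then have "inv w \<otimes> y \<in> W" unfolding W_def by (rule generate.incl)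
      then have "w \<otimes> (inv w \<otimes> y) \<in> W" using w sW by (simp add: subgroup.m_closed)
      then show "y \<in> W" by (simp add: m_assoc[symmetric])
    qed
    then show "\<exists>T. open T \<and> w \<in> T \<and> T \<subseteq> W" using assms by (intro exI[of _ "ball w \<delta>"]) simp
  qed
  have oW': "open (- W)"
  proof (rule iffD2[OF open_subopen], rule ballI)
    fix x assume x: "x \<in> - W"
    have "ball x \<delta> \<subseteq> - W"
    proof
      fix y assume y: "y \<in> ball x \<delta>"
      show "y \<in> - W"
      proof
        assume yW: "y \<in> W"
        from y have "inv y \<otimes> x \<in> ball \<one> \<delta>" by (metis mem_ball dist_commute dist_left)
        then have "inv y \<otimes> x \<in> W" unfolding W_def by (rule generate.incl)
        then have "y \<otimes> (inv y \<otimes> x) \<in> W" using yW sW by (simp add: subgroup.m_closed)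
        then have "x \<in> W" by (simp add: m_assoc[symmetric])
        then show False using x by simp
      qed
    qed
    then show "\<exists>T. open T \<and> x \<in> T \<and> T \<subseteq> - W" using assms x by (intro exI[of _ "ball x \<delta>"]) simp
  qed
  have "W \<inter> H0 = {} \<or> - W \<inter> H0 = {}"
    by (rule connectedD[OF connected_connected_component oW oW']) auto
  moreover have "\<one> \<in> W" unfolding W_def by (rule generate.one)
  ultimately show ?thesis unfolding W_def[symmetric] using one_H0 by blast
qed

inductive reach :: "real \<Rightarrow> real \<Rightarrow> 'g \<Rightarrow> bool" for \<delta> R where
  r0: "reach \<delta> R \<one>"
| rs: "reach \<delta> R p \<Longrightarrow> dist p p' < \<delta> \<Longrightarrow> dist \<one> p' < R \<Longrightarrow> reach \<delta> R p'"

lemma reach_mono: "reach \<delta> R p \<Longrightarrow> R \<le> R' \<Longrightarrow> reach \<delta> R' p"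
  by (induction rule: reach.induct) (auto intro: reach.intros)

lemma reach_in: "reach \<delta> R p \<Longrightarrow> R > 0 \<Longrightarrow> dist \<one> p < R"
  by (induction rule: reach.induct) auto

lemma reach_mult:
  assumes "reach \<delta> R2 q" "reach \<delta> R1 c" "R1 > 0" "R2 > 0"
  shows "reach \<delta> (R1 + R2) (c \<otimes> q)"
  using assms(1)
proof (induction rule: reach.induct)
  case r0
  then show ?case using reach_mono[OF assms(2)] assms(4) by simp
next
  case (rs p p')
  have d1: "dist (c \<otimes> p) (c \<otimes> p') < \<delta>" using rs(2) by (simp add: linv)
  have d2: "dist \<one> (c \<otimes> p') < R1 + R2"
  proof -
    have "dist \<one> (c \<otimes> p') \<le> dist \<one> c + dist c (c \<otimes> p')" by (rule dist_triangle)
    also have "dist c (c \<otimes> p') = dist \<one> p'" using linv[of c \<one> p'] by simp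
    finally show ?thesis using reach_in[OF assms(2,3)] rs(3) by simp
  qed
  show ?case by (rule reach.rs[OF rs(4) d1 d2])
qed

lemma gen_reach:
  assumes "\<delta> > 0" "c \<in> generate G (ball \<one> \<delta>)" shows "\<exists>R>0. reach \<delta> R c"
  using assms(2)
proof (induction rule: generate.induct)
  case one
  then show ?case by (intro exI[of _ 1]) (simp add: reach.r0)
next
  case (incl h)
  then have "reach \<delta> \<delta> h" by (intro reach.rs[OF reach.r0]) (simp_all add: dist_commute)
  then show ?case using assms(1) by blast
next
  case (inv h)
  then have "dist \<one> (inv h) < \<delta>" using dist_inv_e[of h] by (simp add: dist_commute)
  then have "reach \<delta> \<delta> (inv h)" by (intro reach.rs[OF reach.r0]) (simp_all add: dist_commute)
  then show ?case using assms(1) by blast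
next
  case (eng h1 h2)
  then obtain R1 R2 where "R1 > 0" "reach \<delta> R1 h1" "R2 > 0" "reach \<delta> R2 h2" by blast
  then show ?case using reach_mult[of \<delta> R2 h2 R1 h1] by (intro exI[of _ "R1 + R2"]) simp
qed

lemma reach_ball:
  assumes "\<delta> > 0" "finite C" "C \<subseteq> H0" "ball \<one> r \<subseteq> (\<Union>c\<in>C. ball c \<delta>)"
  shows "\<exists>R. \<forall>y\<in>ball \<one> r. reach \<delta> R y"
proof -
  have "\<forall>c\<in>C. \<exists>R. R > 0 \<and> reach \<delta> R c"
  proof
    fix c assume "c \<in> C"
    then have "c \<in> generate G (ball \<one> \<delta>)" using assms(3) H0_gen[OF assms(1)] by blast
    then show "\<exists>R. R > 0 \<and> reach \<delta> R c" by (rule gen_reach[OF assms(1)])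
  qed
  from bchoice[OF this] obtain Rf where Rf0: "\<forall>c\<in>C. Rf c > 0 \<and> reach \<delta> (Rf c) c" by blast
  have Rf: "\<And>c. c \<in> C \<Longrightarrow> Rf c > 0 \<and> reach \<delta> (Rf c) c" using Rf0 by blast
  define R where "R = (\<Sum>c\<in>C. Rf c) + \<bar>r\<bar>"
  show ?thesis
  proof (intro exI[of _ R] ballI)
    fix y assume y: "y \<in> ball \<one> r"
    then have "y \<in> (\<Union>c\<in>C. ball c \<delta>)" using assms(4) by blast
    then obtain c where c: "c \<in> C" "dist c y < \<delta>" by auto
    have "Rf c \<le> (\<Sum>c\<in>C. Rf c)" by (intro member_le_sum c(1) assms(2)) (meson DiffD1 Rf less_imp_le)
    moreover have "0 \<le> \<bar>r\<bar>" by simp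
    ultimately have "Rf c \<le> R" unfolding R_def by linarith
    then have "reach \<delta> R c" using Rf[OF c(1)] reach_mono by blast
    moreover have "dist \<one> y < R"
    proof -
      have "0 \<le> (\<Sum>c\<in>C. Rf c)" by (intro sum_nonneg) (meson Rf less_imp_le)
      moreover have "dist \<one> y < r" using y by simp
      ultimately show ?thesis unfolding R_def by linarith
    qed
    ultimately show "reach \<delta> R y" using c(2) reach.rs by blast
  qed
qed

lemma cover_centers:
  assumes "finite F" "\<forall>y\<in>ball \<one> r. \<exists>p\<in>F. dist p y < \<delta>/2"
  shows "\<exists>C. finite C \<and> C \<subseteq> ball \<one> r \<and> ball \<one> r \<subseteq> (\<Union>c\<in>C. ball c \<delta>)"
proof -
  define F' where "F' = {p\<in>F. \<exists>y\<in>ball \<one> r. dist p y < \<delta>/2}"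
  have "\<forall>p\<in>F'. \<exists>y. y \<in> ball \<one> r \<and> dist p y < \<delta>/2" unfolding F'_def by blast
  then obtain g where g: "\<And>p. p \<in> F' \<Longrightarrow> g p \<in> ball \<one> r \<and> dist p (g p) < \<delta>/2" by metis
  show ?thesis
  proof (intro exI[of _ "g ` F'"] conjI)
    show "finite (g ` F')" using assms(1) unfolding F'_def by simp
    show "g ` F' \<subseteq> ball \<one> r" using g by auto
    show "ball \<one> r \<subseteq> (\<Union>c\<in>g ` F'. ball c \<delta>)"
    proof
      fix y assume y: "y \<in> ball \<one> r"
      then obtain p where p: "p \<in> F" "dist p y < \<delta>/2" using assms(2) by blast
      then have pF: "p \<in> F'" unfolding F'_def using y by blast
      have "dist (g p) y \<le> dist (g p) p + dist p y" by (rule dist_triangle)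
      then have "dist (g p) y < \<delta>" using g[OF pF] p(2) by (simp add: dist_commute)
      then show "y \<in> (\<Union>c\<in>g ` F'. ball c \<delta>)" using pF by auto
    qed
  qed
qed

end


lemma (in group) word_eval_carrier: "word_eval G w \<in> carrier G" if "set w \<subseteq> carrier G \<times> UNIV"
  using that by (induction w) (auto simp: word_eval_def)

lemma (in group) word_eval_append:
  assumes "set u \<subseteq> carrier G \<times> UNIV" "set v \<subseteq> carrier G \<times> UNIV"
  shows "word_eval G (u @ v) = word_eval G u \<otimes> word_eval G v"
  using assms(1)
proof (induction u)
  case Nil
  then show ?case using word_eval_carrier[OF assms(2)] by (simp add: word_eval_def)
next
  case (Cons a u)
  obtain s b where a: "a = (s, b)" by force
  have s: "s \<in> carrier G" using Cons(2) a by auto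
  have IH: "word_eval G (u @ v) = word_eval G u \<otimes> word_eval G v" using Cons by auto
  have wu: "word_eval G u \<in> carrier G" using Cons(2) by (intro word_eval_carrier) auto
  have "word_eval G ((a # u) @ v) = (if b then s else inv s) \<otimes> word_eval G (u @ v)"
    by (simp add: word_eval_def a)
  also have "\<dots> = (if b then s else inv s) \<otimes> (word_eval G u \<otimes> word_eval G v)" using IH by simp
  also have "\<dots> = ((if b then s else inv s) \<otimes> word_eval G u) \<otimes> word_eval G v"
    using s wu word_eval_carrier[OF assms(2)] by (simp add: m_assoc)
  also have "(if b then s else inv s) \<otimes> word_eval G u = word_eval G (a # u)"
    by (simp add: word_eval_def a)
  finally show ?case .
qed

lemma (in group) gen_word:
  assumes "S \<subseteq> carrier G" "g \<in> generate G S"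
  shows "\<exists>w. set w \<subseteq> S \<times> UNIV \<and> word_eval G w = g"
  using assms(2)
proof (induction rule: generate.induct)
  case one
  then show ?case by (intro exI[of _ "[]"]) (simp add: word_eval_def)
next
  case (incl h)
  then show ?case using assms(1) by (intro exI[of _ "[(h, True)]"]) (auto simp: word_eval_def)
next
  case (inv h)
  then show ?case using assms(1) by (intro exI[of _ "[(h, False)]"]) (auto simp: word_eval_def)
next
  case (eng h1 h2)
  then obtain w1 w2 where w: "set w1 \<subseteq> S \<times> UNIV" "word_eval G w1 = h1"
    "set w2 \<subseteq> S \<times> UNIV" "word_eval G w2 = h2" by blast
  have "set w1 \<subseteq> carrier G \<times> UNIV" "set w2 \<subseteq> carrier G \<times> UNIV" using w assms(1) by auto
  then have "word_eval G (w1 @ w2) = h1 \<otimes> h2" using word_eval_append w by simp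
  then show ?case using w by (intro exI[of _ "w1 @ w2"]) auto
qed

definition qeval :: "('c, 'd) monoid_scheme \<Rightarrow> ('a \<Rightarrow> 'c) \<Rightarrow> ('a \<times> bool) list \<Rightarrow> 'c" where
  "qeval Q \<psi> w = foldr (\<lambda>(s,b) acc. (if b then \<psi> s else inv\<^bsub>Q\<^esub> (\<psi> s)) \<otimes>\<^bsub>Q\<^esub> acc) w \<one>\<^bsub>Q\<^esub>"

lemma (in group) qeval_carrier:
  assumes "\<And>s. \<psi> s \<in> carrier G" shows "qeval G \<psi> w \<in> carrier G"
  using assms by (induction w) (auto simp: qeval_def)

lemma (in group) qeval_append:
  assumes "\<And>s. \<psi> s \<in> carrier G"
  shows "qeval G \<psi> (u @ v) = qeval G \<psi> u \<otimes> qeval G \<psi> v"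
proof (induction u)
  case Nil
  have "qeval G \<psi> v \<in> carrier G" by (rule qeval_carrier[OF assms])
  then show ?case by (simp add: qeval_def)
next
  case (Cons a u)
  obtain s b where a: "a = (s, b)" by force
  have s: "(if b then \<psi> s else inv (\<psi> s)) \<in> carrier G" using assms by simp
  have "qeval G \<psi> ((a # u) @ v) = (if b then \<psi> s else inv (\<psi> s)) \<otimes> qeval G \<psi> (u @ v)"
    by (simp add: qeval_def a)
  also have "\<dots> = (if b then \<psi> s else inv (\<psi> s)) \<otimes> (qeval G \<psi> u \<otimes> qeval G \<psi> v)" using Cons by simp
  also have "\<dots> = ((if b then \<psi> s else inv (\<psi> s)) \<otimes> qeval G \<psi> u) \<otimes> qeval G \<psi> v"
    using s qeval_carrier[of \<psi>, OF assms] by (simp add: m_assoc)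
  also have "(if b then \<psi> s else inv (\<psi> s)) \<otimes> qeval G \<psi> u = qeval G \<psi> (a # u)"
    by (simp add: qeval_def a)
  finally show ?case .
qed

lemma (in group) qeval_cong:
  assumes psi: "\<And>s. \<psi> s \<in> carrier G" and rel: "\<And>r. r \<in> R \<Longrightarrow> qeval G \<psi> r = \<one>"
    and "(w, v) \<in> word_congruence R"
  shows "qeval G \<psi> w = qeval G \<psi> v"
  using assms(3)
proof (induction rule: word_congruence.induct)
  case (wc_free u s b v)
  have "qeval G \<psi> [(s, b), (s, \<not> b)] = \<one>" using psi[of s] by (cases b) (simp_all add: qeval_def)
  moreover have "qeval G \<psi> (u @ [(s, b), (s, \<not> b)] @ v) = qeval G \<psi> u \<otimes> (qeval G \<psi> [(s, b), (s, \<not> b)] \<otimes> qeval G \<psi> v)"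
    by (simp only: qeval_append[of \<psi>, OF psi])
  moreover have "qeval G \<psi> (u @ v) = qeval G \<psi> u \<otimes> qeval G \<psi> v"
    using qeval_append[of \<psi>, OF psi] by simp
  moreover have "qeval G \<psi> v \<in> carrier G" by (rule qeval_carrier[OF psi])
  ultimately show ?case by simp
next
  case (wc_rel r u v)
  have "qeval G \<psi> (u @ r @ v) = qeval G \<psi> u \<otimes> (qeval G \<psi> r \<otimes> qeval G \<psi> v)"
    using qeval_append[of \<psi>, OF psi] by simp
  moreover have "qeval G \<psi> (u @ v) = qeval G \<psi> u \<otimes> qeval G \<psi> v"
    using qeval_append[of \<psi>, OF psi] by simp
  moreover have "qeval G \<psi> v \<in> carrier G" by (rule qeval_carrier[OF psi])
  ultimately show ?case using rel[OF wc_rel] by simp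
qed auto

lemma hom_from_presentation:
  fixes M :: "('a, 'm) monoid_scheme" and Q :: "('c, 'n) monoid_scheme"
  assumes M: "group M" and Q: "group Q" and P: "has_presentation M S R"
    and psi: "\<And>s. \<psi> s \<in> carrier Q" and rel: "\<And>r. r \<in> R \<Longrightarrow> qeval Q \<psi> r = \<one>\<^bsub>Q\<^esub>"
  shows "\<exists>h. h \<in> hom M Q \<and> (\<forall>s\<in>S. h s = \<psi> s)"
proof -
  interpret M: group M by (rule M)
  interpret Q: group Q by (rule Q)
  have SM: "S \<subseteq> carrier M" and gen: "generate M S = carrier M"
    and cong: "\<And>w v. set w \<subseteq> S \<times> UNIV \<Longrightarrow> set v \<subseteq> S \<times> UNIV \<Longrightarrow>
        word_eval M w = word_eval M v \<Longrightarrow> (w, v) \<in> word_congruence R"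
    using P unfolding has_presentation_def by blast+
  define W where "W g = (SOME w. set w \<subseteq> S \<times> UNIV \<and> word_eval M w = g)" for g
  have W: "set (W g) \<subseteq> S \<times> UNIV \<and> word_eval M (W g) = g" if "g \<in> carrier M" for g
  proof -
    have "\<exists>w. set w \<subseteq> S \<times> UNIV \<and> word_eval M w = g" using M.gen_word[OF SM] that gen by blast
    then show ?thesis unfolding W_def by (rule someI_ex)
  qed
  have eq: "qeval Q \<psi> w = qeval Q \<psi> v" if "set w \<subseteq> S \<times> UNIV" "set v \<subseteq> S \<times> UNIV"
    "word_eval M w = word_eval M v" for w v
    using Q.qeval_cong[OF psi rel cong[OF that]] by blast
  define h where "h g = qeval Q \<psi> (W g)" for g
  have "h \<in> hom M Q"
  proof (rule homI)
    fix g assume "g \<in> carrier M" show "h g \<in> carrier Q" unfolding h_def by (rule Q.qeval_carrier[OF psi])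
  next
    fix g1 g2 assume g: "g1 \<in> carrier M" "g2 \<in> carrier M"
    have w1: "set (W g1) \<subseteq> S \<times> UNIV" "word_eval M (W g1) = g1" using W[OF g(1)] by auto
    have w2: "set (W g2) \<subseteq> S \<times> UNIV" "word_eval M (W g2) = g2" using W[OF g(2)] by auto
    have w12: "set (W (g1 \<otimes>\<^bsub>M\<^esub> g2)) \<subseteq> S \<times> UNIV" "word_eval M (W (g1 \<otimes>\<^bsub>M\<^esub> g2)) = g1 \<otimes>\<^bsub>M\<^esub> g2"
      using W[OF M.m_closed[OF g]] by auto
    have "word_eval M (W g1 @ W g2) = g1 \<otimes>\<^bsub>M\<^esub> g2"
      using M.word_eval_append[of "W g1" "W g2"] w1 w2 SM by auto
    then have "qeval Q \<psi> (W (g1 \<otimes>\<^bsub>M\<^esub> g2)) = qeval Q \<psi> (W g1 @ W g2)"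
      using w1 w2 w12 by (intro eq) auto
    then show "h (g1 \<otimes>\<^bsub>M\<^esub> g2) = h g1 \<otimes>\<^bsub>Q\<^esub> h g2"
      unfolding h_def using Q.qeval_append[of \<psi>, OF psi] by simp
  qed
  moreover have "h s = \<psi> s" if s: "s \<in> S" for s
  proof -
    have sc: "s \<in> carrier M" using s SM by auto
    have "word_eval M [(s, True)] = s" using sc by (simp add: word_eval_def)
    then have "qeval Q \<psi> (W s) = qeval Q \<psi> [(s, True)]" using W[OF sc] s by (intro eq) auto
    then show ?thesis unfolding h_def using psi[of s] by (simp add: qeval_def)
  qed
  ultimately show ?thesis by blast
qed


locale approx_at = lgm G + M: group M
  for G :: "('g::metric_space, 'b) monoid_scheme" (structure) and M :: "('a, 'c) monoid_scheme" +
  fixes f :: "'a \<Rightarrow> 'g" and R \<epsilon> :: real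
  assumes eps: "\<epsilon> > 0"
    and oneP: "dist \<one> (f \<one>\<^bsub>M\<^esub>) < R"
    and approx: "\<And>g1 g2. g1 \<in> carrier M \<Longrightarrow> g2 \<in> carrier M \<Longrightarrow> dist \<one> (f g1) < R \<Longrightarrow> dist \<one> (f g2) < R
        \<Longrightarrow> dist (f (g1 \<otimes>\<^bsub>M\<^esub> inv\<^bsub>M\<^esub> g2)) (f g1 \<otimes> f (inv\<^bsub>M\<^esub> g2)) \<le> \<epsilon>"
    and dense: "\<And>x. dist \<one> x < R \<Longrightarrow> \<exists>g\<in>carrier M. dist x (f g) < \<epsilon>"
begin

abbreviation "X \<theta> \<equiv> f -` ball \<one> \<theta> \<inter> carrier M"

lemma c1: "dist (f \<one>\<^bsub>M\<^esub>) \<one> \<le> \<epsilon>"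
proof -
  have "dist (f (\<one>\<^bsub>M\<^esub> \<otimes>\<^bsub>M\<^esub> inv\<^bsub>M\<^esub> \<one>\<^bsub>M\<^esub>)) (f \<one>\<^bsub>M\<^esub> \<otimes> f (inv\<^bsub>M\<^esub> \<one>\<^bsub>M\<^esub>)) \<le> \<epsilon>"
    by (rule approx) (simp_all add: oneP)
  then have "dist (f \<one>\<^bsub>M\<^esub>) (f \<one>\<^bsub>M\<^esub> \<otimes> f \<one>\<^bsub>M\<^esub>) \<le> \<epsilon>" by simp
  moreover have "dist (f \<one>\<^bsub>M\<^esub> \<otimes> \<one>) (f \<one>\<^bsub>M\<^esub> \<otimes> f \<one>\<^bsub>M\<^esub>) = dist \<one> (f \<one>\<^bsub>M\<^esub>)" by (rule linv)
  ultimately show ?thesis by (simp add: dist_commute)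
qed

lemma c2: assumes g: "g \<in> carrier M" "dist \<one> (f g) < R"
  shows "dist (f g \<otimes> f (inv\<^bsub>M\<^esub> g)) \<one> \<le> 2 * \<epsilon>"
proof -
  have "dist (f (g \<otimes>\<^bsub>M\<^esub> inv\<^bsub>M\<^esub> g)) (f g \<otimes> f (inv\<^bsub>M\<^esub> g)) \<le> \<epsilon>"
    by (rule approx[OF g(1) g(1) g(2) g(2)])
  then have a: "dist (f \<one>\<^bsub>M\<^esub>) (f g \<otimes> f (inv\<^bsub>M\<^esub> g)) \<le> \<epsilon>" using g by simp
  have "dist (f g \<otimes> f (inv\<^bsub>M\<^esub> g)) \<one> \<le> dist (f g \<otimes> f (inv\<^bsub>M\<^esub> g)) (f \<one>\<^bsub>M\<^esub>) + dist (f \<one>\<^bsub>M\<^esub>) \<one>"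
    by (rule dist_triangle)
  then show ?thesis using a c1 by (simp add: dist_commute)
qed

lemma c2': assumes g: "g \<in> carrier M" "dist \<one> (f g) < R"
  shows "dist (f (inv\<^bsub>M\<^esub> g)) (inv (f g)) \<le> 2 * \<epsilon>"
proof -
  have "dist (inv (f g) \<otimes> (f g \<otimes> f (inv\<^bsub>M\<^esub> g))) (inv (f g) \<otimes> \<one>) = dist (f g \<otimes> f (inv\<^bsub>M\<^esub> g)) \<one>"
    by (rule linv)
  moreover have "inv (f g) \<otimes> (f g \<otimes> f (inv\<^bsub>M\<^esub> g)) = f (inv\<^bsub>M\<^esub> g)" by (simp add: m_assoc[symmetric])
  ultimately show ?thesis using c2[OF g] by simp
qed

lemma c4: assumes g: "g \<in> carrier M" "dist \<one> (f g) < R"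
  shows "dist \<one> (f (inv\<^bsub>M\<^esub> g)) \<le> dist \<one> (f g) + 2 * \<epsilon>"
proof -
  have "dist \<one> (f (inv\<^bsub>M\<^esub> g)) \<le> dist \<one> (inv (f g)) + dist (inv (f g)) (f (inv\<^bsub>M\<^esub> g))"
    by (rule dist_triangle)
  moreover have "dist \<one> (inv (f g)) = dist \<one> (f g)" using dist_inv_e[of "f g"] by (simp add: dist_commute)
  moreover have "dist (inv (f g)) (f (inv\<^bsub>M\<^esub> g)) \<le> 2 * \<epsilon>" using c2'[OF g] by (simp add: dist_commute)
  ultimately show ?thesis by linarith
qed

lemma c3: assumes "a \<in> carrier M" "b \<in> carrier M" "dist \<one> (f a) < R" "dist \<one> (f (inv\<^bsub>M\<^esub> b)) < R"
  shows "dist (f (a \<otimes>\<^bsub>M\<^esub> b)) (f a \<otimes> f b) \<le> \<epsilon>"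
  using approx[OF assms(1) M.inv_closed[OF assms(2)] assms(3,4)] assms(2) by simp

lemma chain_step:
  assumes a: "a \<in> carrier M" "dist (f a) p \<le> 2 * \<epsilon>" "dist \<one> p < R1"
    and pp: "dist p p' < \<delta>"
    and c: "R1 + 2 * \<epsilon> < R" "\<delta> + 5 * \<epsilon> < R" "\<delta> + 3 * \<epsilon> \<le> \<theta>"
  shows "\<exists>q\<in>X \<theta>. dist (f (a \<otimes>\<^bsub>M\<^esub> q)) p' \<le> 2 * \<epsilon>"
proof -
  define t where "t = inv (f a) \<otimes> p'"
  have "dist t \<one> = dist p' (f a)" unfolding t_def by (rule dist_left)
  also have "\<dots> \<le> dist p' p + dist p (f a)" by (rule dist_triangle)
  finally have t1: "dist \<one> t < \<delta> + 2 * \<epsilon>" using a(2) pp by (simp add: dist_commute)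
  have "dist \<one> t < R" using t1 c eps by linarith
  then obtain q where q: "q \<in> carrier M" "dist t (f q) < \<epsilon>" using dense[of t] by blast
  have "dist \<one> (f q) \<le> dist \<one> t + dist t (f q)" by (rule dist_triangle)
  then have fq: "dist \<one> (f q) < \<delta> + 3 * \<epsilon>" using t1 q(2) by linarith
  have aP: "dist \<one> (f a) < R"
  proof -
    have "dist \<one> (f a) \<le> dist \<one> p + dist p (f a)" by (rule dist_triangle)
    then show ?thesis using a c by (simp add: dist_commute)
  qed
  have qP: "dist \<one> (f q) < R" using fq c eps by linarith
  have qi: "dist \<one> (f (inv\<^bsub>M\<^esub> q)) < R"
    using c4[OF q(1) qP] fq c by linarith
  have m: "dist (f (a \<otimes>\<^bsub>M\<^esub> q)) (f a \<otimes> f q) \<le> \<epsilon>" by (rule c3[OF a(1) q(1) aP qi])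
  have "dist (f a \<otimes> f q) (f a \<otimes> t) = dist (f q) t" by (rule linv)
  moreover have "f a \<otimes> t = p'" unfolding t_def by (simp add: m_assoc[symmetric])
  ultimately have "dist (f a \<otimes> f q) p' < \<epsilon>" using q(2) by (simp add: dist_commute)
  moreover have "dist (f (a \<otimes>\<^bsub>M\<^esub> q)) p' \<le> dist (f (a \<otimes>\<^bsub>M\<^esub> q)) (f a \<otimes> f q) + dist (f a \<otimes> f q) p'"
    by (rule dist_triangle)
  ultimately have "dist (f (a \<otimes>\<^bsub>M\<^esub> q)) p' \<le> 2 * \<epsilon>" using m by linarith
  moreover have "q \<in> X \<theta>" using q(1) fq c by auto
  ultimately show ?thesis by blast
qed

lemma chain_reach:
  assumes "reach \<delta> R1 p" "R1 > 0"
    and c: "R1 + 2 * \<epsilon> < R" "\<delta> + 5 * \<epsilon> < R" "\<delta> + 3 * \<epsilon> \<le> \<theta>"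
  shows "\<exists>a\<in>generate M (X \<theta>). dist (f a) p \<le> 2 * \<epsilon>"
  using assms(1)
proof (induction rule: reach.induct)
  case r0
  then show ?case using c1 eps by (intro bexI[of _ "\<one>\<^bsub>M\<^esub>"] generate.one) auto
next
  case (rs p p')
  then obtain a where a: "a \<in> generate M (X \<theta>)" "dist (f a) p \<le> 2 * \<epsilon>" by blast
  have ac: "a \<in> carrier M" using a(1) M.generate_incl[of "X \<theta>"] by blast
  obtain q where q: "q \<in> X \<theta>" "dist (f (a \<otimes>\<^bsub>M\<^esub> q)) p' \<le> 2 * \<epsilon>"
    using chain_step[OF ac a(2) reach_in[OF rs(1) assms(2)] rs(2) c] by blast
  have "a \<otimes>\<^bsub>M\<^esub> q \<in> generate M (X \<theta>)" by (rule generate.eng[OF a(1) generate.incl[OF q(1)]])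
  then show ?case using q(2) by blast
qed

lemma chain_final:
  assumes x: "x \<in> carrier M" "dist \<one> (f x) < r" and rch: "reach \<delta> R1 (f x)" "R1 > 0"
    and c: "R1 + 2 * \<epsilon> < R" "\<delta> + 5 * \<epsilon> < R" "\<delta> + 3 * \<epsilon> \<le> \<theta>" "r + 4 * \<epsilon> < R" "5 * \<epsilon> < \<theta>"
  shows "x \<in> generate M (X \<theta>)"
proof -
  obtain a where a: "a \<in> generate M (X \<theta>)" "dist (f a) (f x) \<le> 2 * \<epsilon>"
    using chain_reach[OF rch c(1-3)] by blast
  have sub: "subgroup (generate M (X \<theta>)) M" by (rule M.generate_is_subgroup) auto
  have ac: "a \<in> carrier M" using a(1) M.generate_incl[of "X \<theta>"] by blast
  have xP: "dist \<one> (f x) < R" using x c eps by linarith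
  have ixP: "dist \<one> (f (inv\<^bsub>M\<^esub> x)) < R" using c4[OF x(1) xP] x c eps by linarith
  have aP: "dist \<one> (f a) < R"
  proof -
    have "dist \<one> (f a) \<le> dist \<one> (f x) + dist (f x) (f a)" by (rule dist_triangle)
    then show ?thesis using a(2) x c eps by (simp add: dist_commute)
  qed
  have iaP: "dist \<one> (f (inv\<^bsub>M\<^esub> a)) < R"
  proof -
    have "dist \<one> (f a) \<le> dist \<one> (f x) + dist (f x) (f a)" by (rule dist_triangle)
    then show ?thesis using c4[OF ac aP] a(2) x c eps by (simp add: dist_commute)
  qed
  define z where "z = inv\<^bsub>M\<^esub> x \<otimes>\<^bsub>M\<^esub> a"
  have zc: "z \<in> carrier M" unfolding z_def using x ac by simp
  have e1: "dist (f z) (f (inv\<^bsub>M\<^esub> x) \<otimes> f a) \<le> \<epsilon>" unfolding z_def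
    by (rule c3[OF M.inv_closed[OF x(1)] ac ixP iaP])
  have e2: "dist (f (inv\<^bsub>M\<^esub> x) \<otimes> f a) (f (inv\<^bsub>M\<^esub> x) \<otimes> f x) \<le> 2 * \<epsilon>" using a(2) by (simp add: linv)
  have e3: "dist (f (inv\<^bsub>M\<^esub> x) \<otimes> f x) \<one> \<le> 2 * \<epsilon>"
    using c2[OF M.inv_closed[OF x(1)] ixP] x(1) by simp
  have "dist (f z) \<one> \<le> dist (f z) (f (inv\<^bsub>M\<^esub> x) \<otimes> f a) + dist (f (inv\<^bsub>M\<^esub> x) \<otimes> f a) \<one>"
    by (rule dist_triangle)
  moreover have "dist (f (inv\<^bsub>M\<^esub> x) \<otimes> f a) \<one> \<le> dist (f (inv\<^bsub>M\<^esub> x) \<otimes> f a) (f (inv\<^bsub>M\<^esub> x) \<otimes> f x) + dist (f (inv\<^bsub>M\<^esub> x) \<otimes> f x) \<one>"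
    by (rule dist_triangle)
  ultimately have "dist (f z) \<one> \<le> 5 * \<epsilon>" using e1 e2 e3 by linarith
  then have "z \<in> X \<theta>" using zc c by (simp add: dist_commute)
  then have zg: "z \<in> generate M (X \<theta>)" by (rule generate.incl)
  have "a \<otimes>\<^bsub>M\<^esub> inv\<^bsub>M\<^esub> z \<in> generate M (X \<theta>)"
    using a(1) zg sub by (simp add: subgroup.m_closed subgroup.m_inv_closed)
  moreover have "a \<otimes>\<^bsub>M\<^esub> inv\<^bsub>M\<^esub> z = x" unfolding z_def using x(1) ac
    by (simp add: M.inv_mult_group M.m_assoc[symmetric])
  ultimately show ?thesis by simp
qed

end


context approx_at
begin

lemma conj_step:
  assumes s: "s \<in> carrier M" "inv\<^bsub>M\<^esub> s \<in> carrier M" "f s \<in> K" "f (inv\<^bsub>M\<^esub> s) \<in> K"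
    and q: "q \<in> X \<theta>"
    and K: "\<forall>\<beta>\<in>K. dist \<one> \<beta> < RK"
    and cj: "\<forall>\<beta>\<in>K. \<forall>w. dist w \<one> < \<theta>1 \<longrightarrow> dist (inv \<beta> \<otimes> w \<otimes> \<beta>) \<one> < r / 4"
    and c: "\<epsilon> + \<theta> < \<theta>1" "RK + \<theta> + \<epsilon> < R" "RK < R" "\<theta> + 2 * \<epsilon> < R" "\<epsilon> < r / 4"
  shows "s \<otimes>\<^bsub>M\<^esub> q \<otimes>\<^bsub>M\<^esub> inv\<^bsub>M\<^esub> s \<in> X r"
proof -
  have qc: "q \<in> carrier M" and fq: "dist \<one> (f q) < \<theta>" using q by auto
  have sP: "dist \<one> (f s) < R" using K s(3) c by fastforce
  have sK: "dist \<one> (f s) < RK" using K s(3) by blast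
  have qP: "dist \<one> (f q) < R" using fq c eps by linarith
  have iqP: "dist \<one> (f (inv\<^bsub>M\<^esub> q)) < R" using c4[OF qc qP] fq c by linarith
  define \<alpha> where "\<alpha> = f (s \<otimes>\<^bsub>M\<^esub> q)"
  define \<beta> where "\<beta> = f (inv\<^bsub>M\<^esub> s)"
  have e1: "dist \<alpha> (f s \<otimes> f q) \<le> \<epsilon>" unfolding \<alpha>_def by (rule c3[OF s(1) qc sP iqP])
  have e2: "dist (f s \<otimes> f q) (f s) < \<theta>" using fq dist_mult_right_e[of "f s" "f q"] by (simp add: dist_commute)
  have "dist \<alpha> (f s) \<le> dist \<alpha> (f s \<otimes> f q) + dist (f s \<otimes> f q) (f s)" by (rule dist_triangle)
  then have as: "dist \<alpha> (f s) < \<epsilon> + \<theta>" using e1 e2 by linarith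
  have "dist \<one> \<alpha> \<le> dist \<one> (f s) + dist (f s) \<alpha>" by (rule dist_triangle)
  then have aP: "dist \<one> \<alpha> < R" using as sK c by (simp add: dist_commute)
  have sqc: "s \<otimes>\<^bsub>M\<^esub> q \<in> carrier M" using s qc by simp
  have aP': "dist \<one> (f (s \<otimes>\<^bsub>M\<^esub> q)) < R" using aP unfolding \<alpha>_def .
  have iisP: "dist \<one> (f (inv\<^bsub>M\<^esub> (inv\<^bsub>M\<^esub> s))) < R" using sP s(1) by simp
  have e3: "dist (f (s \<otimes>\<^bsub>M\<^esub> q \<otimes>\<^bsub>M\<^esub> inv\<^bsub>M\<^esub> s)) (\<alpha> \<otimes> \<beta>) \<le> \<epsilon>"
    unfolding \<alpha>_def \<beta>_def by (rule c3[OF sqc s(2) aP' iisP])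
  define w where "w = inv \<alpha> \<otimes> f s"
  have "dist w \<one> = dist (f s) \<alpha>" unfolding w_def by (rule dist_left)
  then have "dist w \<one> < \<theta>1" using as c by (simp add: dist_commute)
  then have e4': "dist (inv \<beta> \<otimes> w \<otimes> \<beta>) \<one> < r / 4" using cj s(4) unfolding \<beta>_def by blast
  have "dist (inv (\<alpha> \<otimes> \<beta>) \<otimes> (f s \<otimes> \<beta>)) \<one> = dist (f s \<otimes> \<beta>) (\<alpha> \<otimes> \<beta>)" by (rule dist_left)
  moreover have "inv (\<alpha> \<otimes> \<beta>) \<otimes> (f s \<otimes> \<beta>) = inv \<beta> \<otimes> w \<otimes> \<beta>"
    unfolding w_def by (simp add: inv_mult_group m_assoc)
  ultimately have e4: "dist (\<alpha> \<otimes> \<beta>) (f s \<otimes> \<beta>) < r / 4" using e4' by (simp add: dist_commute)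
  have e5: "dist (f s \<otimes> \<beta>) \<one> \<le> 2 * \<epsilon>" unfolding \<beta>_def by (rule c2[OF s(1) sP])
  have "dist (f (s \<otimes>\<^bsub>M\<^esub> q \<otimes>\<^bsub>M\<^esub> inv\<^bsub>M\<^esub> s)) \<one> \<le> dist (f (s \<otimes>\<^bsub>M\<^esub> q \<otimes>\<^bsub>M\<^esub> inv\<^bsub>M\<^esub> s)) (\<alpha> \<otimes> \<beta>) + dist (\<alpha> \<otimes> \<beta>) \<one>"
    by (rule dist_triangle)
  moreover have "dist (\<alpha> \<otimes> \<beta>) \<one> \<le> dist (\<alpha> \<otimes> \<beta>) (f s \<otimes> \<beta>) + dist (f s \<otimes> \<beta>) \<one>"
    by (rule dist_triangle)
  ultimately have "dist (f (s \<otimes>\<^bsub>M\<^esub> q \<otimes>\<^bsub>M\<^esub> inv\<^bsub>M\<^esub> s)) \<one> < r" using e3 e4 e5 c by linarith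
  moreover have "s \<otimes>\<^bsub>M\<^esub> q \<otimes>\<^bsub>M\<^esub> inv\<^bsub>M\<^esub> s \<in> carrier M" using sqc s by simp
  ultimately show ?thesis by (simp add: dist_commute)
qed

lemma normal_Gr:
  assumes S: "S \<subseteq> carrier M" "generate M S = carrier M" "\<forall>s\<in>S. inv\<^bsub>M\<^esub> s \<in> S" "\<forall>s\<in>S. f s \<in> K"
    and K: "\<forall>\<beta>\<in>K. dist \<one> \<beta> < RK"
    and cj: "\<forall>\<beta>\<in>K. \<forall>w. dist w \<one> < \<theta>1 \<longrightarrow> dist (inv \<beta> \<otimes> w \<otimes> \<beta>) \<one> < r / 4"
    and Xr: "X r \<subseteq> generate M (X \<theta>)"
    and c: "\<theta> \<le> r" "\<epsilon> + \<theta> < \<theta>1" "RK + \<theta> + \<epsilon> < R" "RK < R" "\<theta> + 2 * \<epsilon> < R" "\<epsilon> < r / 4"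
  shows "generate M (X r) = generate M (X \<theta>)" "generate M (X r) \<lhd> M"
proof -
  have sub1: "X \<theta> \<subseteq> X r" using c(1) by auto
  have subg: "subgroup (generate M (X r)) M" by (rule M.generate_is_subgroup) auto
  have subg\<theta>: "subgroup (generate M (X \<theta>)) M" by (rule M.generate_is_subgroup) auto
  show eq: "generate M (X r) = generate M (X \<theta>)"
  proof
    show "generate M (X r) \<subseteq> generate M (X \<theta>)" by (rule M.generate_subgroup_incl[OF Xr subg\<theta>])
    show "generate M (X \<theta>) \<subseteq> generate M (X r)" by (rule M.mono_generate[OF sub1])
  qed
  have cs: "s \<otimes>\<^bsub>M\<^esub> x \<otimes>\<^bsub>M\<^esub> inv\<^bsub>M\<^esub> s \<in> generate M (X r)" if s: "s \<in> S" and x: "x \<in> generate M (X \<theta>)" for s x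
    using x
  proof (induction rule: generate.induct)
    case one
    have "s \<otimes>\<^bsub>M\<^esub> \<one>\<^bsub>M\<^esub> \<otimes>\<^bsub>M\<^esub> inv\<^bsub>M\<^esub> s = \<one>\<^bsub>M\<^esub>" using s S(1) by auto
    then show ?case by (simp add: generate.one)
  next
    case (incl q)
    have "s \<otimes>\<^bsub>M\<^esub> q \<otimes>\<^bsub>M\<^esub> inv\<^bsub>M\<^esub> s \<in> X r"
      using s S by (intro conj_step[OF _ _ _ _ incl K cj c(2-6)]) auto
    then show ?case by (rule generate.incl)
  next
    case (inv q)
    have sc: "s \<in> carrier M" and qc: "q \<in> carrier M" using s S(1) inv by auto
    have "s \<otimes>\<^bsub>M\<^esub> q \<otimes>\<^bsub>M\<^esub> inv\<^bsub>M\<^esub> s \<in> X r"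
      using s S by (intro conj_step[OF _ _ _ _ inv K cj c(2-6)]) auto
    then have "inv\<^bsub>M\<^esub> (s \<otimes>\<^bsub>M\<^esub> q \<otimes>\<^bsub>M\<^esub> inv\<^bsub>M\<^esub> s) \<in> generate M (X r)"
      by (intro generate.inv)
    moreover have "inv\<^bsub>M\<^esub> (s \<otimes>\<^bsub>M\<^esub> q \<otimes>\<^bsub>M\<^esub> inv\<^bsub>M\<^esub> s) = s \<otimes>\<^bsub>M\<^esub> inv\<^bsub>M\<^esub> q \<otimes>\<^bsub>M\<^esub> inv\<^bsub>M\<^esub> s"
      using sc qc by (simp add: M.inv_mult_group M.m_assoc)
    ultimately show ?case by simp
  next
    case (eng h1 h2)
    have sc: "s \<in> carrier M" using s S(1) by auto
    have gi: "generate M (X \<theta>) \<subseteq> carrier M" by (rule M.generate_incl) auto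
    have h: "h1 \<in> carrier M" "h2 \<in> carrier M" using eng gi by blast+
    have "(s \<otimes>\<^bsub>M\<^esub> h1 \<otimes>\<^bsub>M\<^esub> inv\<^bsub>M\<^esub> s) \<otimes>\<^bsub>M\<^esub> (s \<otimes>\<^bsub>M\<^esub> h2 \<otimes>\<^bsub>M\<^esub> inv\<^bsub>M\<^esub> s) \<in> generate M (X r)"
    proof (rule generate.eng)
      show "s \<otimes>\<^bsub>M\<^esub> h1 \<otimes>\<^bsub>M\<^esub> inv\<^bsub>M\<^esub> s \<in> generate M (X r)" using eng by blast
      show "s \<otimes>\<^bsub>M\<^esub> h2 \<otimes>\<^bsub>M\<^esub> inv\<^bsub>M\<^esub> s \<in> generate M (X r)" using eng by blast
    qed
    moreover have "(s \<otimes>\<^bsub>M\<^esub> h1 \<otimes>\<^bsub>M\<^esub> inv\<^bsub>M\<^esub> s) \<otimes>\<^bsub>M\<^esub> (s \<otimes>\<^bsub>M\<^esub> h2 \<otimes>\<^bsub>M\<^esub> inv\<^bsub>M\<^esub> s) = s \<otimes>\<^bsub>M\<^esub> (h1 \<otimes>\<^bsub>M\<^esub> h2) \<otimes>\<^bsub>M\<^esub> inv\<^bsub>M\<^esub> s"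
    proof -
      have ca: "\<And>y. y \<in> carrier M \<Longrightarrow> inv\<^bsub>M\<^esub> s \<otimes>\<^bsub>M\<^esub> (s \<otimes>\<^bsub>M\<^esub> y) = y"
        using sc by (simp add: M.m_assoc[symmetric])
      show ?thesis using sc h by (simp add: M.m_assoc ca)
    qed
    ultimately show ?case by simp
  qed
  have all: "\<forall>x\<in>generate M (X r). g \<otimes>\<^bsub>M\<^esub> x \<otimes>\<^bsub>M\<^esub> inv\<^bsub>M\<^esub> g \<in> generate M (X r)" if g: "g \<in> generate M S" for g
    using g
  proof (induction rule: generate.induct)
    case one
    then show ?case using subg by (simp add: subgroup.mem_carrier)
  next
    case (incl s)
    then show ?case using cs eq by simp
  next
    case (inv s)
    then have "inv\<^bsub>M\<^esub> s \<in> S" using S(3) by blast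
    then show ?case using cs eq by simp
  next
    case (eng h1 h2)
    have h: "h1 \<in> carrier M" "h2 \<in> carrier M" using eng M.generate_incl[OF S(1)] by blast+
    show ?case
    proof
      fix x assume x: "x \<in> generate M (X r)"
      have xc: "x \<in> carrier M" using x subg by (simp add: subgroup.mem_carrier)
      have "h2 \<otimes>\<^bsub>M\<^esub> x \<otimes>\<^bsub>M\<^esub> inv\<^bsub>M\<^esub> h2 \<in> generate M (X r)" using eng x by blast
      then have "h1 \<otimes>\<^bsub>M\<^esub> (h2 \<otimes>\<^bsub>M\<^esub> x \<otimes>\<^bsub>M\<^esub> inv\<^bsub>M\<^esub> h2) \<otimes>\<^bsub>M\<^esub> inv\<^bsub>M\<^esub> h1 \<in> generate M (X r)" using eng by blast
      moreover have "h1 \<otimes>\<^bsub>M\<^esub> (h2 \<otimes>\<^bsub>M\<^esub> x \<otimes>\<^bsub>M\<^esub> inv\<^bsub>M\<^esub> h2) \<otimes>\<^bsub>M\<^esub> inv\<^bsub>M\<^esub> h1 = h1 \<otimes>\<^bsub>M\<^esub> h2 \<otimes>\<^bsub>M\<^esub> x \<otimes>\<^bsub>M\<^esub> inv\<^bsub>M\<^esub> (h1 \<otimes>\<^bsub>M\<^esub> h2)"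
        using h xc by (simp add: M.m_assoc M.inv_mult_group)
      ultimately show "h1 \<otimes>\<^bsub>M\<^esub> h2 \<otimes>\<^bsub>M\<^esub> x \<otimes>\<^bsub>M\<^esub> inv\<^bsub>M\<^esub> (h1 \<otimes>\<^bsub>M\<^esub> h2) \<in> generate M (X r)" by simp
    qed
  qed
  show "generate M (X r) \<lhd> M"
  proof (rule M.normal_invI[OF subg])
    fix g x assume "g \<in> carrier M" "x \<in> generate M (X r)"
    then show "g \<otimes>\<^bsub>M\<^esub> x \<otimes>\<^bsub>M\<^esub> inv\<^bsub>M\<^esub> g \<in> generate M (X r)" using all S(2) by blast
  qed
qed

end


context lgm
begin

abbreviation "cc x \<equiv> H0 #> x"

lemma cc_close: assumes "ball \<one> r \<subseteq> H0" "dist x y < r" shows "cc x = cc y"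
proof -
  have "dist \<one> (inv y \<otimes> x) = dist x y" using dist_left[of y x] by (simp add: dist_commute)
  then have "inv y \<otimes> x \<in> ball \<one> r" using assms(2) by simp
  then have "inv y \<otimes> x \<in> H0" using assms(1) by (rule subsetD[rotated])
  then have "y \<otimes> (inv y \<otimes> x) \<otimes> inv y \<in> H0" by (rule H0_conj)
  moreover have "y \<otimes> (inv y \<otimes> x) \<otimes> inv y = x \<otimes> inv y" by (simp add: m_assoc[symmetric])
  ultimately have "x \<otimes> inv y \<in> H0" by simp
  then have "x \<in> H0 #> y" using subgroup.rcos_module[OF H0_sub is_group] by simp
  then show ?thesis using repr_independence[OF _ _ H0_sub] by simp
qed

lemma Q_group: "group (G Mod H0)"
  using normal.factorgroup_is_group[OF H0_normal] .

lemma cc_hom: "(\<lambda>x. cc x) \<in> hom G (G Mod H0)"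
  using normal.r_coset_hom_Mod[OF H0_normal] .

lemma cc_gh: "group_hom G (G Mod H0) (\<lambda>x. cc x)"
  using cc_hom Q_group by (simp add: group_hom_def group_hom_axioms_def is_group)

lemma cc_carrier: "cc x \<in> carrier (G Mod H0)"
  using cc_hom unfolding hom_def by auto

lemma cc_mult: "cc (x \<otimes> y) = cc x \<otimes>\<^bsub>G Mod H0\<^esub> cc y"
  using cc_hom unfolding hom_def by auto

lemma cc_inv: "cc (inv x) = inv\<^bsub>G Mod H0\<^esub> cc x"
  using group_hom.hom_inv[OF cc_gh] by simp

lemma cc_one: "cc \<one> = \<one>\<^bsub>G Mod H0\<^esub>"
  using coset_mult_one[of H0] by (simp add: carr)

end

context approx_at
begin

lemma hom_part:
  assumes r: "ball \<one> r \<subseteq> H0"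
    and S: "S \<subseteq> carrier M" "\<forall>s\<in>S. inv\<^bsub>M\<^esub> s \<in> S" "\<forall>s\<in>S. dist \<one> (f s) < R"
      "has_presentation M S Rel" "\<forall>w\<in>Rel. length w = 3"
    and c: "2 * \<epsilon> < r"
  shows "\<exists>h. h \<in> hom M (G Mod H0) \<and> (\<forall>s\<in>S. h s = cc (f s))"
proof -
  define Q where "Q = G Mod H0"
  interpret Q: group Q unfolding Q_def by (rule Q_group)
  define \<psi> where "\<psi> s = cc (f s)" for s
  have psi: "\<And>s. \<psi> s \<in> carrier Q" unfolding \<psi>_def Q_def by (rule cc_carrier)
  have letter: "(if b then \<psi> s else inv\<^bsub>Q\<^esub> (\<psi> s)) = cc (f (if b then s else inv\<^bsub>M\<^esub> s))"
    if s: "s \<in> S" for s b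
  proof (cases b)
    case True then show ?thesis by (simp add: \<psi>_def)
  next
    case False
    have sc: "s \<in> carrier M" using s S by auto
    have "dist (inv (f s)) (f (inv\<^bsub>M\<^esub> s)) < r" using c2'[OF sc] S s c by (simp add: dist_commute)
    then have "cc (inv (f s)) = cc (f (inv\<^bsub>M\<^esub> s))" by (rule cc_close[OF r])
    then show ?thesis using False by (simp add: \<psi>_def Q_def cc_inv)
  qed
  have rel: "qeval Q \<psi> w = \<one>\<^bsub>Q\<^esub>" if w: "w \<in> Rel" for w
  proof -
    have wS: "set w \<subseteq> S \<times> UNIV" and we: "word_eval M w = \<one>\<^bsub>M\<^esub>"
      using S(4) w unfolding has_presentation_def by blast+
    have "length w = Suc (Suc (Suc 0))" using S(5) w by simp
    then obtain l1 l2 l3 where w3: "w = [l1, l2, l3]"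
      by (auto simp: length_Suc_conv)
    obtain s1 b1 s2 b2 s3 b3 where l: "l1 = (s1, b1)" "l2 = (s2, b2)" "l3 = (s3, b3)" by (meson surj_pair)
    have sS: "s1 \<in> S" "s2 \<in> S" "s3 \<in> S" using wS w3 l by auto
    define x1 where "x1 = (if b1 then s1 else inv\<^bsub>M\<^esub> s1)"
    define x2 where "x2 = (if b2 then s2 else inv\<^bsub>M\<^esub> s2)"
    define x3 where "x3 = (if b3 then s3 else inv\<^bsub>M\<^esub> s3)"
    have xS: "x1 \<in> S" "x2 \<in> S" "x3 \<in> S" unfolding x1_def x2_def x3_def using sS S(2) by auto
    have xc: "x1 \<in> carrier M" "x2 \<in> carrier M" "x3 \<in> carrier M" using xS S(1) by auto
    have "x1 \<otimes>\<^bsub>M\<^esub> (x2 \<otimes>\<^bsub>M\<^esub> (x3 \<otimes>\<^bsub>M\<^esub> \<one>\<^bsub>M\<^esub>)) = \<one>\<^bsub>M\<^esub>"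
      using we unfolding w3 l word_eval_def x1_def x2_def x3_def by simp
    then have "(x1 \<otimes>\<^bsub>M\<^esub> x2) \<otimes>\<^bsub>M\<^esub> x3 = \<one>\<^bsub>M\<^esub>" using xc by (simp add: M.m_assoc)
    then have x12: "inv\<^bsub>M\<^esub> x3 = x1 \<otimes>\<^bsub>M\<^esub> x2" using xc by (intro M.inv_equality) auto
    have qe: "qeval Q \<psi> w = cc (f x1) \<otimes>\<^bsub>Q\<^esub> (cc (f x2) \<otimes>\<^bsub>Q\<^esub> (cc (f x3) \<otimes>\<^bsub>Q\<^esub> \<one>\<^bsub>Q\<^esub>))"
      unfolding w3 l qeval_def x1_def x2_def x3_def using letter sS by simp
    have cq: "\<And>x. cc x \<in> carrier Q" unfolding Q_def by (rule cc_carrier)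
    have "cc (f x1) \<otimes>\<^bsub>Q\<^esub> cc (f x2) = cc (f x1 \<otimes> f x2)" unfolding Q_def by (simp add: cc_mult)
    also have "\<dots> = cc (f (x1 \<otimes>\<^bsub>M\<^esub> x2))"
    proof (rule cc_close[OF r])
      have "dist (f (x1 \<otimes>\<^bsub>M\<^esub> x2)) (f x1 \<otimes> f x2) \<le> \<epsilon>"
        using xS S by (intro c3[OF xc(1,2)]) auto
      then show "dist (f x1 \<otimes> f x2) (f (x1 \<otimes>\<^bsub>M\<^esub> x2)) < r" using c eps by (simp add: dist_commute)
    qed
    also have "\<dots> = cc (inv (f x3))"
    proof (rule cc_close[OF r])
      show "dist (f (x1 \<otimes>\<^bsub>M\<^esub> x2)) (inv (f x3)) < r" using c2'[OF xc(3)] xS S c x12 by simp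
    qed
    finally have "cc (f x1) \<otimes>\<^bsub>Q\<^esub> cc (f x2) = cc (inv (f x3))" .
    then have "qeval Q \<psi> w = cc (inv (f x3)) \<otimes>\<^bsub>Q\<^esub> cc (f x3)"
      using qe cq by (simp add: Q.m_assoc[symmetric])
    also have "\<dots> = cc (inv (f x3) \<otimes> f x3)" unfolding Q_def by (rule cc_mult[symmetric])
    also have "\<dots> = \<one>\<^bsub>Q\<^esub>" unfolding Q_def using cc_one by simp
    finally show ?thesis .
  qed
  obtain h where "h \<in> hom M Q" "\<forall>s\<in>S. h s = \<psi> s"
    using hom_from_presentation[OF M.is_group Q.is_group S(4) psi rel] by blast
  then show ?thesis unfolding Q_def \<psi>_def by blast
qed

end


context approx_at
begin

lemma main_at:
  assumes r: "r > 0" "ball \<one> r \<subseteq> H0"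
    and S: "symmetric_subset M S" "determining_set M S" "f -` S0 \<inter> carrier M \<subseteq> S" "S \<subseteq> f -` K \<inter> carrier M"
    and S0: "generate G S0 = carrier G"
    and surjP: "\<forall>s\<in>S0. \<exists>sc \<rho>c. \<epsilon> < \<rho>c \<and> dist \<one> sc < R \<and> ball sc \<rho>c \<subseteq> S0 \<and> (\<forall>y\<in>ball sc \<rho>c. cc y = cc s)"
    and kerP: "S0 \<noteq> {} \<Longrightarrow> \<exists>s0 \<rho>. ball s0 \<rho> \<subseteq> S0 \<and> dist \<one> s0 < R \<and> 2 * \<epsilon> + \<theta> < \<rho>"
    and K: "\<forall>\<beta>\<in>K. dist \<one> \<beta> < RK"
    and cj: "\<forall>\<beta>\<in>K. \<forall>w. dist w \<one> < \<theta>1 \<longrightarrow> dist (inv \<beta> \<otimes> w \<otimes> \<beta>) \<one> < r / 4"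
    and rch: "\<forall>y\<in>ball \<one> r. reach \<delta> R1 y" "R1 > 0"
    and c: "R1 + 2 * \<epsilon> < R" "\<delta> + 5 * \<epsilon> < R" "\<delta> + 3 * \<epsilon> \<le> \<theta>" "r + 4 * \<epsilon> < R" "5 * \<epsilon> < \<theta>"
      "\<theta> \<le> r" "\<epsilon> + \<theta> < \<theta>1" "RK + \<theta> + \<epsilon> < R" "RK < R" "\<theta> + 2 * \<epsilon> < R" "\<epsilon> < r / 4"
      "2 * \<epsilon> < r" "\<theta> + \<epsilon> < r"
  shows "let Gr = generate M (X r) in Gr \<lhd> M \<and>
           (\<exists>h. h \<in> hom (M Mod Gr) (G Mod H0) \<and> h ` carrier (M Mod Gr) = carrier (G Mod H0))"
proof -
  define Q where "Q = G Mod H0"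
  interpret Q: group Q unfolding Q_def by (rule Q_group)
  have Sc: "S \<subseteq> carrier M" and Sgen: "generate M S = carrier M"
    and SR: "\<exists>Rel. (\<forall>w\<in>Rel. length w = 3) \<and> has_presentation M S Rel"
    using S(2) unfolding determining_set_def by blast+
  then obtain Rel where Rel: "\<forall>w\<in>Rel. length w = 3" "has_presentation M S Rel" by blast
  have Sinv: "\<forall>s\<in>S. inv\<^bsub>M\<^esub> s \<in> S" using S(1) unfolding symmetric_subset_def by blast
  have SK: "\<forall>s\<in>S. f s \<in> K" using S(4) by blast
  have SP: "\<forall>s\<in>S. dist \<one> (f s) < R" using SK K c by fastforce
  have Xr: "X r \<subseteq> generate M (X \<theta>)"
  proof
    fix x assume x: "x \<in> X r"
    then have xc: "x \<in> carrier M" and fx: "dist \<one> (f x) < r" by auto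
    have "reach \<delta> R1 (f x)" using rch(1) fx by simp
    then show "x \<in> generate M (X \<theta>)" by (rule chain_final[OF xc fx _ rch(2) c(1-5)])
  qed
  have eqG: "generate M (X r) = generate M (X \<theta>)" and nG: "generate M (X r) \<lhd> M"
    using normal_Gr[OF Sc Sgen Sinv SK K cj Xr c(6-11)] by auto
  obtain h0 where h0: "h0 \<in> hom M Q" "\<forall>s\<in>S. h0 s = cc (f s)"
    using hom_part[OF r(2) Sc Sinv SP Rel(2) Rel(1) c(12)] unfolding Q_def by blast
  interpret h0: group_hom M Q h0 using h0(1) by (simp add: group_hom_def group_hom_axioms_def M.is_group Q.is_group)
  have ker: "h0 q = \<one>\<^bsub>Q\<^esub>" if q: "q \<in> X \<theta>" for q
  proof (cases "S0 = {}")
    case True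
    then have "carrier G = {\<one>}" using S0 generate_empty by simp
    then have U: "\<And>y. y = \<one>" using carr by auto
    have "h0 q \<in> carrier Q" using q by auto
    then obtain y where "h0 q = cc y" unfolding Q_def carrier_FactGroup by auto
    then show ?thesis using U[of y] cc_one unfolding Q_def by simp
  next
    case False
    then obtain s0 \<rho> where s0: "ball s0 \<rho> \<subseteq> S0" "dist \<one> s0 < R" "2 * \<epsilon> + \<theta> < \<rho>" using kerP by blast
    obtain a where a: "a \<in> carrier M" "dist s0 (f a) < \<epsilon>" using dense[OF s0(2)] by blast
    have "f a \<in> ball s0 \<rho>" using a(2) s0(3) c eps by simp
    then have aS: "a \<in> S" using s0(1) S(3) a(1) by blast
    have aP: "dist \<one> (f a) < R" using SP aS by blast
    have qc: "q \<in> carrier M" and fq: "dist \<one> (f q) < \<theta>" using q by auto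
    have qP: "dist \<one> (f q) < R" using fq c eps by linarith
    have iqP: "dist \<one> (f (inv\<^bsub>M\<^esub> q)) < R" using c4[OF qc qP] fq c by linarith
    have e1: "dist (f (a \<otimes>\<^bsub>M\<^esub> q)) (f a \<otimes> f q) \<le> \<epsilon>" by (rule c3[OF a(1) qc aP iqP])
    have e2: "dist (f a \<otimes> f q) (f a) < \<theta>" using fq dist_mult_right_e[of "f a" "f q"] by (simp add: dist_commute)
    have "dist (f (a \<otimes>\<^bsub>M\<^esub> q)) (f a) \<le> dist (f (a \<otimes>\<^bsub>M\<^esub> q)) (f a \<otimes> f q) + dist (f a \<otimes> f q) (f a)"
      by (rule dist_triangle)
    then have e3: "dist (f (a \<otimes>\<^bsub>M\<^esub> q)) (f a) < \<epsilon> + \<theta>" using e1 e2 by linarith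
    have "dist s0 (f (a \<otimes>\<^bsub>M\<^esub> q)) \<le> dist s0 (f a) + dist (f a) (f (a \<otimes>\<^bsub>M\<^esub> q))" by (rule dist_triangle)
    then have "dist s0 (f (a \<otimes>\<^bsub>M\<^esub> q)) < \<rho>" using a(2) e3 s0(3) by (simp add: dist_commute)
    then have "f (a \<otimes>\<^bsub>M\<^esub> q) \<in> ball s0 \<rho>" by simp
    then have aqS: "a \<otimes>\<^bsub>M\<^esub> q \<in> S" using s0(1) S(3) a(1) qc by blast
    have "h0 (a \<otimes>\<^bsub>M\<^esub> q) = cc (f (a \<otimes>\<^bsub>M\<^esub> q))" using h0(2) aqS by blast
    also have "\<dots> = cc (f a)" using e3 c by (intro cc_close[OF r(2)]) simp
    also have "\<dots> = h0 a" using h0(2) aS by simp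
    finally have "h0 a \<otimes>\<^bsub>Q\<^esub> h0 q = h0 a" using a(1) qc by simp
    then show ?thesis using a(1) qc by simp
  qed
  have subK: "generate M (X r) \<subseteq> kernel M Q h0"
  proof -
    have "X \<theta> \<subseteq> kernel M Q h0" using ker unfolding kernel_def by auto
    then have "generate M (X \<theta>) \<subseteq> kernel M Q h0" by (rule M.generate_subgroup_incl[OF _ h0.subgroup_kernel])
    then show ?thesis using eqG by simp
  qed
  have subgr: "subgroup (generate M (X r)) M" using nG by (rule normal_imp_subgroup)
  obtain g where g: "g \<in> hom (M Mod generate M (X r)) Q"
    "\<And>x. x \<in> carrier M \<Longrightarrow> g (r_coset M (generate M (X r)) x) = h0 x"
  proof (rule FactGroup_universal[OF h0(1) nG])
    fix x y assume xy: "x \<in> carrier M" "y \<in> carrier M"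
      "r_coset M (generate M (X r)) x = r_coset M (generate M (X r)) y"
    have "x \<in> r_coset M (generate M (X r)) y" using M.rcos_self[OF xy(1) subgr] xy(3) by simp
    then have "x \<otimes>\<^bsub>M\<^esub> inv\<^bsub>M\<^esub> y \<in> generate M (X r)"
      using subgroup.rcos_module[OF subgr M.is_group xy(2) xy(1)] by simp
    then have k: "h0 (x \<otimes>\<^bsub>M\<^esub> inv\<^bsub>M\<^esub> y) = \<one>\<^bsub>Q\<^esub>" using subK unfolding kernel_def by blast
    have "h0 x = h0 ((x \<otimes>\<^bsub>M\<^esub> inv\<^bsub>M\<^esub> y) \<otimes>\<^bsub>M\<^esub> y)" using xy by (simp add: M.m_assoc)
    also have "\<dots> = h0 (x \<otimes>\<^bsub>M\<^esub> inv\<^bsub>M\<^esub> y) \<otimes>\<^bsub>Q\<^esub> h0 y" using xy by simp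
    also have "\<dots> = h0 y" using k xy by simp
    finally show "h0 x = h0 y" .
  qed auto
  have img: "g ` carrier (M Mod generate M (X r)) = h0 ` carrier M"
    unfolding carrier_FactGroup using g(2) by (auto simp: image_iff)
  have surj: "h0 ` carrier M = carrier Q"
  proof
    show "h0 ` carrier M \<subseteq> carrier Q" by auto
    have I: "subgroup (h0 ` carrier M) Q" by (rule h0.img_is_subgroup)
    have "cc ` S0 \<subseteq> h0 ` carrier M"
    proof
      fix z assume "z \<in> cc ` S0"
      then obtain s where s: "s \<in> S0" "z = cc s" by blast
      then obtain sc \<rho>c where sc: "\<epsilon> < \<rho>c" "dist \<one> sc < R" "ball sc \<rho>c \<subseteq> S0" "\<forall>y\<in>ball sc \<rho>c. cc y = cc s"
        using surjP by blast
      obtain a where a: "a \<in> carrier M" "dist sc (f a) < \<epsilon>" using dense[OF sc(2)] by blast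
      have fa: "f a \<in> ball sc \<rho>c" using a(2) sc(1) by simp
      then have "a \<in> S" using sc(3) S(3) a(1) by blast
      then have "h0 a = cc (f a)" using h0(2) by blast
      also have "\<dots> = z" using sc(4) fa s(2) by blast
      finally show "z \<in> h0 ` carrier M" using a(1) by blast
    qed
    then have "generate Q (cc ` S0) \<subseteq> h0 ` carrier M" by (rule Q.generate_subgroup_incl[OF _ I])
    moreover have "generate Q (cc ` S0) = cc ` generate G S0"
      unfolding Q_def by (rule group_hom.generate_img[OF cc_gh]) (simp add: carr)
    ultimately have "cc ` carrier G \<subseteq> h0 ` carrier M" using S0 by simp
    moreover have "carrier Q = cc ` carrier G" unfolding Q_def carrier_FactGroup by simp
    ultimately show "carrier Q \<subseteq> h0 ` carrier M" by simp
  qed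
  show ?thesis unfolding Let_def using nG g(1) img surj unfolding Q_def by auto
qed

end


lemma discrete_all_open: assumes "\<forall>x::'g::metric_space. open {x}" shows "open (A::'g set)"
proof (rule iffD2[OF open_subopen], rule ballI)
  fix x assume "x \<in> A" then show "\<exists>T. open T \<and> x \<in> T \<and> T \<subseteq> A" using assms by (intro exI[of _ "{x}"]) auto
qed

lemma discrete_all_open2: assumes "\<forall>x::'g::metric_space. open {x}" shows "open (A::('g \<times> 'g) set)"
proof (rule iffD2[OF open_subopen], rule ballI)
  fix p assume p: "p \<in> A"
  obtain a b where ab: "p = (a, b)" by force
  have "open ({a} \<times> {b})" using assms by (intro open_Times) auto
  then show "\<exists>T. open T \<and> p \<in> T \<and> T \<subseteq> A" using p ab by (intro exI[of _ "{a} \<times> {b}"]) auto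
qed

lemma discrete_cont: assumes "\<And>A. open (A::'x::topological_space set)" shows "continuous_on UNIV (h :: 'x \<Rightarrow> 'y::topological_space)"
  unfolding continuous_on_open_invariant using assms by blast

lemma chart_conn:
  assumes "is_chart U \<phi>" "x \<in> U"
  shows "\<exists>V. open V \<and> connected V \<and> x \<in> V"
proof -
  have U: "open U" "inj_on \<phi> U" "open (\<phi> ` U)" "continuous_on U \<phi>" "continuous_on (\<phi> ` U) (inv_into U \<phi>)"
    using assms(1) unfolding is_chart_def by blast+
  obtain \<rho> where \<rho>: "\<rho> > 0" "ball (\<phi> x) \<rho> \<subseteq> \<phi> ` U" using U(3) assms(2) open_contains_ball by blast
  define V where "V = U \<inter> \<phi> -` ball (\<phi> x) \<rho>"
  have oV: "open V" unfolding V_def by (rule continuous_open_preimage[OF U(4) U(1) open_ball])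
  have eqV: "V = inv_into U \<phi> ` ball (\<phi> x) \<rho>"
  proof
    show "V \<subseteq> inv_into U \<phi> ` ball (\<phi> x) \<rho>"
    proof
      fix y assume "y \<in> V"
      then have y: "y \<in> U" "\<phi> y \<in> ball (\<phi> x) \<rho>" unfolding V_def by auto
      have "y = inv_into U \<phi> (\<phi> y)" using inv_into_f_f[OF U(2) y(1)] by simp
      then show "y \<in> inv_into U \<phi> ` ball (\<phi> x) \<rho>" using y(2) by blast
    qed
    show "inv_into U \<phi> ` ball (\<phi> x) \<rho> \<subseteq> V"
    proof
      fix y assume "y \<in> inv_into U \<phi> ` ball (\<phi> x) \<rho>"
      then obtain z where z: "z \<in> ball (\<phi> x) \<rho>" "y = inv_into U \<phi> z" by blast
      have zU: "z \<in> \<phi> ` U" using z(1) \<rho>(2) by blast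
      have "y \<in> U" using z(2) inv_into_into[OF zU] by simp
      moreover have "\<phi> y = z" using z(2) f_inv_into_f[OF zU] by simp
      ultimately show "y \<in> V" unfolding V_def using z(1) by simp
    qed
  qed
  have "connected V" unfolding eqV
    by (rule connected_continuous_image[OF continuous_on_subset[OF U(5) \<rho>(2)]]) simp
  moreover have "x \<in> V" unfolding V_def using assms(2) \<rho>(1) by simp
  ultimately show ?thesis using oV by blast
qed

lemma lie_lgm:
  fixes \<Gamma> :: "'g::metric_space monoid"
  assumes "lie_group TYPE('e::euclidean_space) \<Gamma>" "left_invariant_metric \<Gamma>"
  shows "lgm \<Gamma>"
proof -
  have grp: "group \<Gamma>" and carr: "carrier \<Gamma> = UNIV"
    using assms(1) unfolding lie_group_def discrete_lie_group_def lie_group_modelled_on_def by blast+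
  have linv: "\<And>g x y. dist (g \<otimes>\<^bsub>\<Gamma>\<^esub> x) (g \<otimes>\<^bsub>\<Gamma>\<^esub> y) = dist x y"
    using assms(2) carr unfolding left_invariant_metric_def by simp
  have rest: "continuous_on UNIV (\<lambda>(x,y). x \<otimes>\<^bsub>\<Gamma>\<^esub> y) \<and> continuous_on UNIV (\<lambda>x. inv\<^bsub>\<Gamma>\<^esub> x) \<and>
      (\<forall>x::'g. \<exists>V. open V \<and> connected V \<and> x \<in> V)"
  proof (cases "discrete_lie_group \<Gamma>")
    case True
    then have d: "\<forall>x::'g. open {x}" unfolding discrete_lie_group_def by blast
    have "continuous_on UNIV (\<lambda>(x,y). x \<otimes>\<^bsub>\<Gamma>\<^esub> y)" by (rule discrete_cont[OF discrete_all_open2[OF d]])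
    moreover have "continuous_on UNIV (\<lambda>x. inv\<^bsub>\<Gamma>\<^esub> x)" by (rule discrete_cont[OF discrete_all_open[OF d]])
    moreover have "\<forall>x::'g. \<exists>V. open V \<and> connected V \<and> x \<in> V"
      using d by (intro allI, rule_tac x="{x}" in exI) simp
    ultimately show ?thesis by blast
  next
    case False
    then have m: "lie_group_modelled_on TYPE('e) \<Gamma>" using assms(1) unfolding lie_group_def by blast
    then obtain A :: "('g set \<times> ('g \<Rightarrow> 'e)) set" where A: "smooth_atlas A"
      unfolding lie_group_modelled_on_def by blast
    have cm: "continuous_on UNIV (\<lambda>(x,y). x \<otimes>\<^bsub>\<Gamma>\<^esub> y)" "continuous_on UNIV (\<lambda>x. inv\<^bsub>\<Gamma>\<^esub> x)"
      using m unfolding lie_group_modelled_on_def by blast+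
    have "\<forall>x::'g. \<exists>V. open V \<and> connected V \<and> x \<in> V"
    proof
      fix x :: 'g
      have "x \<in> (\<Union>(U,\<phi>)\<in>A. U)" using A unfolding smooth_atlas_def by blast
      then obtain U \<phi> where U: "(U, \<phi>) \<in> A" "x \<in> U" by blast
      have "is_chart U \<phi>" using A U(1) unfolding smooth_atlas_def by blast
      then show "\<exists>V. open V \<and> connected V \<and> x \<in> V" using chart_conn U(2) by blast
    qed
    then show ?thesis using cm by blast
  qed
  show ?thesis
    by (intro lgm.intro grp lgm_axioms.intro carr linv) (use rest in blast)+
qed


theorem mainTheorem14:
  fixes \<Gamma> :: "'g::metric_space monoid"
    and \<Gamma>s :: "nat \<Rightarrow> 'a monoid"
    and f :: "nat \<Rightarrow> 'a \<Rightarrow> 'g"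
    and r :: real
  assumes "lie_group TYPE('e::euclidean_space) \<Gamma>"
    and "left_invariant_metric \<Gamma>"
    and "\<And>i. group (\<Gamma>s i)"
    and "clean_discrete_approximation \<Gamma>s \<Gamma> f"
    and "r > 0"
    and "ball \<one>\<^bsub>\<Gamma>\<^esub> r \<subseteq> connected_component_set UNIV \<one>\<^bsub>\<Gamma>\<^esub>"
  shows "\<forall>\<^sub>F i in sequentially.
           let G = generate (\<Gamma>s i) (f i -` ball \<one>\<^bsub>\<Gamma>\<^esub> r \<inter> carrier (\<Gamma>s i)) in
           G \<lhd> \<Gamma>s i \<and>
           (\<exists>h. h \<in> hom (\<Gamma>s i Mod G) (\<Gamma> Mod connected_component_set UNIV \<one>\<^bsub>\<Gamma>\<^esub>) \<and>
                h ` carrier (\<Gamma>s i Mod G) = carrier (\<Gamma> Mod connected_component_set UNIV \<one>\<^bsub>\<Gamma>\<^esub>))"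
proof -
  interpret L: lgm \<Gamma> by (rule lie_lgm[OF assms(1,2)])
  have r: "r > 0" "ball \<one>\<^bsub>\<Gamma>\<^esub> r \<subseteq> L.H0" using assms(5,6) by auto
  obtain R0 where R0: "R0 > 0" "\<forall>\<^sub>F i in sequentially.
        generate (\<Gamma>s i) (f i -` ball \<one>\<^bsub>\<Gamma>\<^esub> R0 \<inter> carrier (\<Gamma>s i)) = carrier (\<Gamma>s i) \<and>
        \<one>\<^bsub>\<Gamma>s i\<^esub> \<in> f i -` ball \<one>\<^bsub>\<Gamma>\<^esub> R0"
    using assms(4) unfolding clean_discrete_approximation_def discrete_approximation_def by blast
  have E2: "\<forall>R>0. \<forall>\<epsilon>>0. \<forall>\<^sub>F i in sequentially.
        finite (f i -` ball \<one>\<^bsub>\<Gamma>\<^esub> R \<inter> carrier (\<Gamma>s i)) \<and>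
        (\<forall>x\<in>ball \<one>\<^bsub>\<Gamma>\<^esub> R. \<exists>g\<in>carrier (\<Gamma>s i). f i g \<in> ball x \<epsilon>) \<and>
        (\<forall>g1\<in>f i -` ball \<one>\<^bsub>\<Gamma>\<^esub> R \<inter> carrier (\<Gamma>s i).
         \<forall>g2\<in>f i -` ball \<one>\<^bsub>\<Gamma>\<^esub> R \<inter> carrier (\<Gamma>s i).
           dist (f i (g1 \<otimes>\<^bsub>\<Gamma>s i\<^esub> inv\<^bsub>\<Gamma>s i\<^esub> g2))
                (f i g1 \<otimes>\<^bsub>\<Gamma>\<^esub> f i (inv\<^bsub>\<Gamma>s i\<^esub> g2)) \<le> \<epsilon>)"
    using assms(4) unfolding clean_discrete_approximation_def discrete_approximation_def by blast
  note E2' = E2[rule_format]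
  obtain S0 K0 where SK: "open S0" "generate \<Gamma> S0 = carrier \<Gamma>" "compact K0"
    and E3: "\<forall>\<^sub>F i in sequentially. \<exists>S.
            symmetric_subset (\<Gamma>s i) S \<and> determining_set (\<Gamma>s i) S \<and>
            f i -` S0 \<inter> carrier (\<Gamma>s i) \<subseteq> S \<and> S \<subseteq> f i -` K0 \<inter> carrier (\<Gamma>s i)"
    using assms(4) unfolding clean_discrete_approximation_def by blast
  obtain RK where RK: "RK > 0" "\<forall>\<beta>\<in>K0. dist \<one>\<^bsub>\<Gamma>\<^esub> \<beta> < RK"
  proof -
    obtain x e where xe: "\<forall>y\<in>K0. dist x y \<le> e" using compact_imp_bounded[OF SK(3)] unfolding bounded_def by blast
    show ?thesis
    proof (rule that[of "dist \<one>\<^bsub>\<Gamma>\<^esub> x + \<bar>e\<bar> + 1"])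
      show "0 < dist \<one>\<^bsub>\<Gamma>\<^esub> x + \<bar>e\<bar> + 1" by (simp add: add_nonneg_pos)
      show "\<forall>\<beta>\<in>K0. dist \<one>\<^bsub>\<Gamma>\<^esub> \<beta> < dist \<one>\<^bsub>\<Gamma>\<^esub> x + \<bar>e\<bar> + 1"
      proof
        fix \<beta> assume "\<beta> \<in> K0"
        then have "dist x \<beta> \<le> e" using xe by blast
        moreover have "dist \<one>\<^bsub>\<Gamma>\<^esub> \<beta> \<le> dist \<one>\<^bsub>\<Gamma>\<^esub> x + dist x \<beta>" by (rule dist_triangle)
        ultimately show "dist \<one>\<^bsub>\<Gamma>\<^esub> \<beta> < dist \<one>\<^bsub>\<Gamma>\<^esub> x + \<bar>e\<bar> + 1" by linarith
      qed
    qed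
  qed
  obtain \<theta>1 where \<theta>1: "\<theta>1 > 0" "\<forall>\<beta>\<in>K0. \<forall>w. dist w \<one>\<^bsub>\<Gamma>\<^esub> < \<theta>1 \<longrightarrow>
      dist (inv\<^bsub>\<Gamma>\<^esub> \<beta> \<otimes>\<^bsub>\<Gamma>\<^esub> w \<otimes>\<^bsub>\<Gamma>\<^esub> \<beta>) \<one>\<^bsub>\<Gamma>\<^esub> < r / 4"
    using L.conj_unif[OF SK(3), of "r / 4"] r(1) by auto
  have S0K0: "S0 \<subseteq> K0"
  proof
    fix x assume xS: "x \<in> S0"
    show "x \<in> K0"
    proof (rule ccontr)
      assume xK: "x \<notin> K0"
      have "open (- K0)" using compact_imp_closed[OF SK(3)] by (simp add: open_Compl)
      then obtain e1 where e1: "e1 > 0" "ball x e1 \<subseteq> - K0" using xK open_contains_ball by blast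
      obtain e2 where e2: "e2 > 0" "ball x e2 \<subseteq> S0" using SK(1) xS open_contains_ball by blast
      define e where "e = min e1 e2"
      have e: "e > 0" "ball x e \<subseteq> - K0" "ball x e \<subseteq> S0" using e1 e2 unfolding e_def by auto
      have Rx: "dist \<one>\<^bsub>\<Gamma>\<^esub> x + 1 > 0" by (simp add: add_nonneg_pos)
      obtain N where N: "\<forall>n\<ge>N. (finite (f n -` ball \<one>\<^bsub>\<Gamma>\<^esub> (dist \<one>\<^bsub>\<Gamma>\<^esub> x + 1) \<inter> carrier (\<Gamma>s n)) \<and>
        (\<forall>y\<in>ball \<one>\<^bsub>\<Gamma>\<^esub> (dist \<one>\<^bsub>\<Gamma>\<^esub> x + 1). \<exists>g\<in>carrier (\<Gamma>s n). f n g \<in> ball y e) \<and>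
        (\<forall>g1\<in>f n -` ball \<one>\<^bsub>\<Gamma>\<^esub> (dist \<one>\<^bsub>\<Gamma>\<^esub> x + 1) \<inter> carrier (\<Gamma>s n).
         \<forall>g2\<in>f n -` ball \<one>\<^bsub>\<Gamma>\<^esub> (dist \<one>\<^bsub>\<Gamma>\<^esub> x + 1) \<inter> carrier (\<Gamma>s n).
           dist (f n (g1 \<otimes>\<^bsub>\<Gamma>s n\<^esub> inv\<^bsub>\<Gamma>s n\<^esub> g2))
                (f n g1 \<otimes>\<^bsub>\<Gamma>\<^esub> f n (inv\<^bsub>\<Gamma>s n\<^esub> g2)) \<le> e)) \<and>
        (\<exists>S. symmetric_subset (\<Gamma>s n) S \<and> determining_set (\<Gamma>s n) S \<and>
            f n -` S0 \<inter> carrier (\<Gamma>s n) \<subseteq> S \<and> S \<subseteq> f n -` K0 \<inter> carrier (\<Gamma>s n))"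
        using eventually_conj[OF E2'[OF Rx e(1)] E3] unfolding eventually_sequentially by (rule exE)
      then have i: "\<forall>y\<in>ball \<one>\<^bsub>\<Gamma>\<^esub> (dist \<one>\<^bsub>\<Gamma>\<^esub> x + 1). \<exists>g\<in>carrier (\<Gamma>s N). f N g \<in> ball y e"
        "\<exists>S. f N -` S0 \<inter> carrier (\<Gamma>s N) \<subseteq> S \<and> S \<subseteq> f N -` K0 \<inter> carrier (\<Gamma>s N)"
        using order_refl[of N] by blast+
      have "x \<in> ball \<one>\<^bsub>\<Gamma>\<^esub> (dist \<one>\<^bsub>\<Gamma>\<^esub> x + 1)" by simp
      then obtain g where g: "g \<in> carrier (\<Gamma>s N)" "f N g \<in> ball x e" using i(1) by blast
      have "f N g \<in> S0" using g(2) e(3) by blast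
      then have "f N g \<in> K0" using i(2) g(1) by blast
      then show False using g(2) e(2) by blast
    qed
  qed
  define AP where "AP R e i \<longleftrightarrow> finite (f i -` ball \<one>\<^bsub>\<Gamma>\<^esub> R \<inter> carrier (\<Gamma>s i)) \<and>
        (\<forall>x\<in>ball \<one>\<^bsub>\<Gamma>\<^esub> R. \<exists>g\<in>carrier (\<Gamma>s i). f i g \<in> ball x e) \<and>
        (\<forall>g1\<in>f i -` ball \<one>\<^bsub>\<Gamma>\<^esub> R \<inter> carrier (\<Gamma>s i).
         \<forall>g2\<in>f i -` ball \<one>\<^bsub>\<Gamma>\<^esub> R \<inter> carrier (\<Gamma>s i).
           dist (f i (g1 \<otimes>\<^bsub>\<Gamma>s i\<^esub> inv\<^bsub>\<Gamma>s i\<^esub> g2))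
                (f i g1 \<otimes>\<^bsub>\<Gamma>\<^esub> f i (inv\<^bsub>\<Gamma>s i\<^esub> g2)) \<le> e)" for R e i
  have EAP: "\<And>R e. R > 0 \<Longrightarrow> e > 0 \<Longrightarrow> eventually (AP R e) sequentially"
    unfolding AP_def by (rule E2')
  have ev_ex: "\<And>P. eventually P sequentially \<Longrightarrow> \<exists>i. P i"
    unfolding eventually_sequentially by blast
  \<comment> \<open>finitely many cosets meet K0\<close>
  have ocls: "\<And>c. open {y. (connected_component_set UNIV \<one>\<^bsub>\<Gamma>\<^esub> #>\<^bsub>\<Gamma>\<^esub> y) = (connected_component_set UNIV \<one>\<^bsub>\<Gamma>\<^esub> #>\<^bsub>\<Gamma>\<^esub> c)}"
  proof (rule iffD2[OF open_subopen], rule ballI)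
    fix c y assume y: "y \<in> {y. (connected_component_set UNIV \<one>\<^bsub>\<Gamma>\<^esub> #>\<^bsub>\<Gamma>\<^esub> y) = (connected_component_set UNIV \<one>\<^bsub>\<Gamma>\<^esub> #>\<^bsub>\<Gamma>\<^esub> c)}"
    have "ball y r \<subseteq> {y. (connected_component_set UNIV \<one>\<^bsub>\<Gamma>\<^esub> #>\<^bsub>\<Gamma>\<^esub> y) = (connected_component_set UNIV \<one>\<^bsub>\<Gamma>\<^esub> #>\<^bsub>\<Gamma>\<^esub> c)}"
    proof
      fix z assume "z \<in> ball y r"
      then have "dist z y < r" by (simp add: dist_commute)
      then have "(connected_component_set UNIV \<one>\<^bsub>\<Gamma>\<^esub> #>\<^bsub>\<Gamma>\<^esub> z) = (connected_component_set UNIV \<one>\<^bsub>\<Gamma>\<^esub> #>\<^bsub>\<Gamma>\<^esub> y)" by (rule L.cc_close[OF r(2)])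
      then show "z \<in> {y. (connected_component_set UNIV \<one>\<^bsub>\<Gamma>\<^esub> #>\<^bsub>\<Gamma>\<^esub> y) = (connected_component_set UNIV \<one>\<^bsub>\<Gamma>\<^esub> #>\<^bsub>\<Gamma>\<^esub> c)}" using y by simp
    qed
    then show "\<exists>T. open T \<and> y \<in> T \<and> T \<subseteq> {y. (connected_component_set UNIV \<one>\<^bsub>\<Gamma>\<^esub> #>\<^bsub>\<Gamma>\<^esub> y) = (connected_component_set UNIV \<one>\<^bsub>\<Gamma>\<^esub> #>\<^bsub>\<Gamma>\<^esub> c)}" using r(1) by (intro exI[of _ "ball y r"]) simp
  qed
  have cov: "K0 \<subseteq> (\<Union>c\<in>K0. {y. (connected_component_set UNIV \<one>\<^bsub>\<Gamma>\<^esub> #>\<^bsub>\<Gamma>\<^esub> y) = (connected_component_set UNIV \<one>\<^bsub>\<Gamma>\<^esub> #>\<^bsub>\<Gamma>\<^esub> c)})" by blast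
  obtain C where C: "C \<subseteq> K0" "finite C" "K0 \<subseteq> (\<Union>c\<in>C. {y. (connected_component_set UNIV \<one>\<^bsub>\<Gamma>\<^esub> #>\<^bsub>\<Gamma>\<^esub> y) = (connected_component_set UNIV \<one>\<^bsub>\<Gamma>\<^esub> #>\<^bsub>\<Gamma>\<^esub> c)})"
    by (rule compactE_image[OF SK(3) ocls cov]) blast
  define C' where "C' = {c\<in>C. \<exists>s\<in>S0. (connected_component_set UNIV \<one>\<^bsub>\<Gamma>\<^esub> #>\<^bsub>\<Gamma>\<^esub> s) = (connected_component_set UNIV \<one>\<^bsub>\<Gamma>\<^esub> #>\<^bsub>\<Gamma>\<^esub> c)}"
  have finC': "finite C'" using C(2) unfolding C'_def by simp
  have "\<forall>c\<in>C'. \<exists>p. snd p > 0 \<and> ball (fst p) (snd p) \<subseteq> S0 \<and> (\<forall>y\<in>ball (fst p) (snd p). (connected_component_set UNIV \<one>\<^bsub>\<Gamma>\<^esub> #>\<^bsub>\<Gamma>\<^esub> y) = (connected_component_set UNIV \<one>\<^bsub>\<Gamma>\<^esub> #>\<^bsub>\<Gamma>\<^esub> c))"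
  proof
    fix c assume "c \<in> C'"
    then obtain s where s: "s \<in> S0" "(connected_component_set UNIV \<one>\<^bsub>\<Gamma>\<^esub> #>\<^bsub>\<Gamma>\<^esub> s) = (connected_component_set UNIV \<one>\<^bsub>\<Gamma>\<^esub> #>\<^bsub>\<Gamma>\<^esub> c)" unfolding C'_def by blast
    have "open (S0 \<inter> {y. (connected_component_set UNIV \<one>\<^bsub>\<Gamma>\<^esub> #>\<^bsub>\<Gamma>\<^esub> y) = (connected_component_set UNIV \<one>\<^bsub>\<Gamma>\<^esub> #>\<^bsub>\<Gamma>\<^esub> c)})" using SK(1) ocls by blast
    moreover have "s \<in> S0 \<inter> {y. (connected_component_set UNIV \<one>\<^bsub>\<Gamma>\<^esub> #>\<^bsub>\<Gamma>\<^esub> y) = (connected_component_set UNIV \<one>\<^bsub>\<Gamma>\<^esub> #>\<^bsub>\<Gamma>\<^esub> c)}" using s by simp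
    ultimately obtain \<rho> where "\<rho> > 0" "ball s \<rho> \<subseteq> S0 \<inter> {y. (connected_component_set UNIV \<one>\<^bsub>\<Gamma>\<^esub> #>\<^bsub>\<Gamma>\<^esub> y) = (connected_component_set UNIV \<one>\<^bsub>\<Gamma>\<^esub> #>\<^bsub>\<Gamma>\<^esub> c)}"
      using open_contains_ball by blast
    then show "\<exists>p. snd p > 0 \<and> ball (fst p) (snd p) \<subseteq> S0 \<and> (\<forall>y\<in>ball (fst p) (snd p). (connected_component_set UNIV \<one>\<^bsub>\<Gamma>\<^esub> #>\<^bsub>\<Gamma>\<^esub> y) = (connected_component_set UNIV \<one>\<^bsub>\<Gamma>\<^esub> #>\<^bsub>\<Gamma>\<^esub> c))"
      by (intro exI[of _ "(s, \<rho>)"]) auto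
  qed
  then obtain pf where pf: "\<forall>c\<in>C'. snd (pf c) > 0 \<and> ball (fst (pf c)) (snd (pf c)) \<subseteq> S0 \<and>
      (\<forall>y\<in>ball (fst (pf c)) (snd (pf c)). (connected_component_set UNIV \<one>\<^bsub>\<Gamma>\<^esub> #>\<^bsub>\<Gamma>\<^esub> y) = (connected_component_set UNIV \<one>\<^bsub>\<Gamma>\<^esub> #>\<^bsub>\<Gamma>\<^esub> c))" by (rule bchoice[THEN exE]) blast
  obtain \<rho>s where \<rho>s: "\<rho>s > 0" "\<forall>c\<in>C'. \<rho>s \<le> snd (pf c)"
    using finite_pos_min[OF finC', of "\<lambda>c. snd (pf c)"] pf by blast
  define Ms where "Ms = (\<Sum>c\<in>C'. dist \<one>\<^bsub>\<Gamma>\<^esub> (fst (pf c))) + 1"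
  have Ms: "Ms > 0" "\<forall>c\<in>C'. dist \<one>\<^bsub>\<Gamma>\<^esub> (fst (pf c)) < Ms"
  proof -
    have "0 \<le> (\<Sum>c\<in>C'. dist \<one>\<^bsub>\<Gamma>\<^esub> (fst (pf c)))" by (intro sum_nonneg) simp
    then show "Ms > 0" unfolding Ms_def by linarith
    show "\<forall>c\<in>C'. dist \<one>\<^bsub>\<Gamma>\<^esub> (fst (pf c)) < Ms"
    proof
      fix c assume "c \<in> C'"
      then have "dist \<one>\<^bsub>\<Gamma>\<^esub> (fst (pf c)) \<le> (\<Sum>c\<in>C'. dist \<one>\<^bsub>\<Gamma>\<^esub> (fst (pf c)))"
        by (intro member_le_sum finC') simp_all
      then show "dist \<one>\<^bsub>\<Gamma>\<^esub> (fst (pf c)) < Ms" unfolding Ms_def by linarith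
    qed
  qed
  have surjP: "\<forall>s\<in>S0. \<exists>sc \<rho>c. e < \<rho>c \<and> dist \<one>\<^bsub>\<Gamma>\<^esub> sc < RR \<and> ball sc \<rho>c \<subseteq> S0 \<and> (\<forall>y\<in>ball sc \<rho>c. (connected_component_set UNIV \<one>\<^bsub>\<Gamma>\<^esub> #>\<^bsub>\<Gamma>\<^esub> y) = (connected_component_set UNIV \<one>\<^bsub>\<Gamma>\<^esub> #>\<^bsub>\<Gamma>\<^esub> s))"
    if "e < \<rho>s" "Ms \<le> RR" for e RR
  proof
    fix s assume s: "s \<in> S0"
    then have "s \<in> K0" using S0K0 by blast
    then obtain c where c: "c \<in> C" "(connected_component_set UNIV \<one>\<^bsub>\<Gamma>\<^esub> #>\<^bsub>\<Gamma>\<^esub> s) = (connected_component_set UNIV \<one>\<^bsub>\<Gamma>\<^esub> #>\<^bsub>\<Gamma>\<^esub> c)" using C(3) by blast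
    then have cC: "c \<in> C'" unfolding C'_def using s by blast
    have "e < snd (pf c)" using \<rho>s(2) cC that(1) by fastforce
    moreover have "dist \<one>\<^bsub>\<Gamma>\<^esub> (fst (pf c)) < RR" using Ms(2) cC that(2) by fastforce
    moreover have "ball (fst (pf c)) (snd (pf c)) \<subseteq> S0" using pf cC by blast
    moreover have "\<forall>y\<in>ball (fst (pf c)) (snd (pf c)). (connected_component_set UNIV \<one>\<^bsub>\<Gamma>\<^esub> #>\<^bsub>\<Gamma>\<^esub> y) = (connected_component_set UNIV \<one>\<^bsub>\<Gamma>\<^esub> #>\<^bsub>\<Gamma>\<^esub> s)" using pf cC c(2) by simp
    ultimately show "\<exists>sc \<rho>c. e < \<rho>c \<and> dist \<one>\<^bsub>\<Gamma>\<^esub> sc < RR \<and> ball sc \<rho>c \<subseteq> S0 \<and> (\<forall>y\<in>ball sc \<rho>c. (connected_component_set UNIV \<one>\<^bsub>\<Gamma>\<^esub> #>\<^bsub>\<Gamma>\<^esub> y) = (connected_component_set UNIV \<one>\<^bsub>\<Gamma>\<^esub> #>\<^bsub>\<Gamma>\<^esub> s))"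
      by blast
  qed
  obtain s0 \<rho> where s0: "\<rho> > 0" "S0 \<noteq> {} \<longrightarrow> ball s0 \<rho> \<subseteq> S0"
  proof (cases "S0 = {}")
    case True
    then show ?thesis using that[of 1 "\<one>\<^bsub>\<Gamma>\<^esub>"] by simp
  next
    case False
    then obtain s0 where "s0 \<in> S0" by blast
    then obtain \<rho> where "\<rho> > 0" "ball s0 \<rho> \<subseteq> S0" using SK(1) open_contains_ball by blast
    then show ?thesis using that by blast
  qed
  define \<theta> where "\<theta> = min (r / 2) (min (\<theta>1 / 2) (\<rho> / 2))"
  have \<theta>: "\<theta> > 0" "\<theta> \<le> r / 2" "\<theta> \<le> \<theta>1 / 2" "\<theta> \<le> \<rho> / 2"
    unfolding \<theta>_def using r(1) \<theta>1(1) s0(1) by auto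
  define \<delta> where "\<delta> = \<theta> / 2"
  have \<delta>: "\<delta> > 0" unfolding \<delta>_def using \<theta> by simp
  obtain R1 where R1: "R1 > 0" "\<forall>y\<in>ball \<one>\<^bsub>\<Gamma>\<^esub> r. L.reach \<delta> R1 y"
  proof -
    have "r + \<delta> > 0" "\<delta> / 2 > 0" using r(1) \<delta> by auto
    then obtain i where i: "AP (r + \<delta>) (\<delta> / 2) i" using ev_ex[OF EAP] by blast
    define F where "F = f i ` (f i -` ball \<one>\<^bsub>\<Gamma>\<^esub> (r + \<delta>) \<inter> carrier (\<Gamma>s i))"
    have fin: "finite F" using i unfolding AP_def F_def by simp
    have dens: "\<forall>y\<in>ball \<one>\<^bsub>\<Gamma>\<^esub> r. \<exists>p\<in>F. dist p y < \<delta> / 2"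
    proof
      fix y assume y: "y \<in> ball \<one>\<^bsub>\<Gamma>\<^esub> r"
      then have "y \<in> ball \<one>\<^bsub>\<Gamma>\<^esub> (r + \<delta>)" using \<delta> by simp
      moreover have "\<forall>x\<in>ball \<one>\<^bsub>\<Gamma>\<^esub> (r + \<delta>). \<exists>g\<in>carrier (\<Gamma>s i). f i g \<in> ball x (\<delta> / 2)"
        using i unfolding AP_def by blast
      ultimately obtain g where g0: "g \<in> carrier (\<Gamma>s i)" "f i g \<in> ball y (\<delta> / 2)" by blast
      then have g: "g \<in> carrier (\<Gamma>s i)" "dist y (f i g) < \<delta> / 2" by simp_all
      have "dist \<one>\<^bsub>\<Gamma>\<^esub> (f i g) \<le> dist \<one>\<^bsub>\<Gamma>\<^esub> y + dist y (f i g)" by (rule dist_triangle)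
      then have "dist \<one>\<^bsub>\<Gamma>\<^esub> (f i g) < r + \<delta>" using y g(2) \<delta> by simp
      then have "f i g \<in> F" unfolding F_def using g(1) by simp
      then show "\<exists>p\<in>F. dist p y < \<delta> / 2" using g(2) by (intro bexI[of _ "f i g"]) (simp_all add: dist_commute)
    qed
    obtain C2 where C2: "finite C2" "C2 \<subseteq> ball \<one>\<^bsub>\<Gamma>\<^esub> r" "ball \<one>\<^bsub>\<Gamma>\<^esub> r \<subseteq> (\<Union>c\<in>C2. ball c \<delta>)"
      using L.cover_centers[OF fin dens] by blast
    have "C2 \<subseteq> L.H0" using C2(2) r(2) by blast
    then obtain R1' where R1': "\<forall>y\<in>ball \<one>\<^bsub>\<Gamma>\<^esub> r. L.reach \<delta> R1' y"
      using L.reach_ball[OF \<delta> C2(1) _ C2(3)] by blast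
    show ?thesis
    proof (rule that[of "\<bar>R1'\<bar> + 1"])
      show "\<bar>R1'\<bar> + 1 > 0" by simp
      show "\<forall>y\<in>ball \<one>\<^bsub>\<Gamma>\<^esub> r. L.reach \<delta> (\<bar>R1'\<bar> + 1) y" using R1' L.reach_mono[of \<delta> R1' _ "\<bar>R1'\<bar> + 1"] by simp
    qed
  qed
  define \<epsilon> where "\<epsilon> = min (min (\<theta> / 10) (r / 10)) (min (min (\<rho>s / 2) (\<theta>1 / 4)) (min (\<rho> / 8) 1))"
  have \<epsilon>: "\<epsilon> > 0" "\<epsilon> \<le> \<theta> / 10" "\<epsilon> \<le> r / 10" "\<epsilon> \<le> \<rho>s / 2" "\<epsilon> \<le> \<theta>1 / 4" "\<epsilon> \<le> \<rho> / 8" "\<epsilon> \<le> 1"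
    unfolding \<epsilon>_def using \<theta> r(1) \<rho>s(1) \<theta>1(1) s0(1) by auto
  define R where "R = R0 + R1 + RK + r + Ms + dist \<one>\<^bsub>\<Gamma>\<^esub> s0 + \<theta> + \<delta> + 10"
  have Rge: "R0 \<le> R" "R1 + 10 \<le> R" "RK + r + \<theta> + \<delta> + 10 \<le> R" "Ms \<le> R" "dist \<one>\<^bsub>\<Gamma>\<^esub> s0 < R" "r + 10 \<le> R"
    unfolding R_def using R0(1) R1(1) RK(1) r(1) Ms(1) \<theta>(1) \<delta> zero_le_dist[of "\<one>\<^bsub>\<Gamma>\<^esub>" s0] by linarith+
  have Rpos: "R > 0" using Rge r(1) by linarith
  have kerP: "\<exists>s0 \<rho>. ball s0 \<rho> \<subseteq> S0 \<and> dist \<one>\<^bsub>\<Gamma>\<^esub> s0 < R \<and> 2 * \<epsilon> + \<theta> < \<rho>" if "S0 \<noteq> {}"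
  proof -
    have "2 * \<epsilon> + \<theta> < \<rho>" using \<epsilon> \<theta> s0(1) by linarith
    then show ?thesis using s0(2) that Rge(5) by blast
  qed
  define CL where "CL i \<longleftrightarrow> (\<exists>S. symmetric_subset (\<Gamma>s i) S \<and> determining_set (\<Gamma>s i) S \<and>
            f i -` S0 \<inter> carrier (\<Gamma>s i) \<subseteq> S \<and> S \<subseteq> f i -` K0 \<inter> carrier (\<Gamma>s i))" for i
  have EV: "\<forall>\<^sub>F i in sequentially. (generate (\<Gamma>s i) (f i -` ball \<one>\<^bsub>\<Gamma>\<^esub> R0 \<inter> carrier (\<Gamma>s i)) = carrier (\<Gamma>s i) \<and>
        \<one>\<^bsub>\<Gamma>s i\<^esub> \<in> f i -` ball \<one>\<^bsub>\<Gamma>\<^esub> R0) \<and> AP R \<epsilon> i \<and> CL i"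
    unfolding CL_def by (intro eventually_conj R0(2) EAP Rpos \<epsilon>(1) E3)
  have lg: "lgm \<Gamma>" by (rule lie_lgm[OF assms(1,2)])
  have c: "R1 + 2 * \<epsilon> < R" "\<delta> + 5 * \<epsilon> < R" "\<delta> + 3 * \<epsilon> \<le> \<theta>" "r + 4 * \<epsilon> < R" "5 * \<epsilon> < \<theta>"
      "\<theta> \<le> r" "\<epsilon> + \<theta> < \<theta>1" "RK + \<theta> + \<epsilon> < R" "RK < R" "\<theta> + 2 * \<epsilon> < R" "\<epsilon> < r / 4"
      "2 * \<epsilon> < r" "\<theta> + \<epsilon> < r"
    using \<theta> \<epsilon> Rge r(1) RK(1) \<theta>1(1) R1(1) unfolding \<delta>_def by linarith+
  show ?thesis
  proof (rule eventually_mono[OF EV])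
    fix i assume Hi: "(generate (\<Gamma>s i) (f i -` ball \<one>\<^bsub>\<Gamma>\<^esub> R0 \<inter> carrier (\<Gamma>s i)) = carrier (\<Gamma>s i) \<and>
        \<one>\<^bsub>\<Gamma>s i\<^esub> \<in> f i -` ball \<one>\<^bsub>\<Gamma>\<^esub> R0) \<and> AP R \<epsilon> i \<and> CL i"
    then have one: "dist \<one>\<^bsub>\<Gamma>\<^esub> (f i \<one>\<^bsub>\<Gamma>s i\<^esub>) < R0" by simp
    have ap: "AP R \<epsilon> i" using Hi by blast
    obtain S where S: "symmetric_subset (\<Gamma>s i) S" "determining_set (\<Gamma>s i) S"
      "f i -` S0 \<inter> carrier (\<Gamma>s i) \<subseteq> S" "S \<subseteq> f i -` K0 \<inter> carrier (\<Gamma>s i)"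
      using Hi unfolding CL_def by blast
    have apx: "\<forall>g1\<in>f i -` ball \<one>\<^bsub>\<Gamma>\<^esub> R \<inter> carrier (\<Gamma>s i).
         \<forall>g2\<in>f i -` ball \<one>\<^bsub>\<Gamma>\<^esub> R \<inter> carrier (\<Gamma>s i).
           dist (f i (g1 \<otimes>\<^bsub>\<Gamma>s i\<^esub> inv\<^bsub>\<Gamma>s i\<^esub> g2))
                (f i g1 \<otimes>\<^bsub>\<Gamma>\<^esub> f i (inv\<^bsub>\<Gamma>s i\<^esub> g2)) \<le> \<epsilon>"
      using ap unfolding AP_def by blast
    have dns: "\<forall>x\<in>ball \<one>\<^bsub>\<Gamma>\<^esub> R. \<exists>g\<in>carrier (\<Gamma>s i). f i g \<in> ball x \<epsilon>"
      using ap unfolding AP_def by blast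
    interpret A: approx_at \<Gamma> "\<Gamma>s i" "f i" R \<epsilon>
    proof (rule approx_at.intro[OF lg assms(3)], rule approx_at_axioms.intro)
      show "\<epsilon> > 0" by (rule \<epsilon>(1))
      show "dist \<one>\<^bsub>\<Gamma>\<^esub> (f i \<one>\<^bsub>\<Gamma>s i\<^esub>) < R" using one Rge(1) by linarith
      fix g1 g2 assume g: "g1 \<in> carrier (\<Gamma>s i)" "g2 \<in> carrier (\<Gamma>s i)" "dist \<one>\<^bsub>\<Gamma>\<^esub> (f i g1) < R" "dist \<one>\<^bsub>\<Gamma>\<^esub> (f i g2) < R"
      then have "g1 \<in> f i -` ball \<one>\<^bsub>\<Gamma>\<^esub> R \<inter> carrier (\<Gamma>s i)" "g2 \<in> f i -` ball \<one>\<^bsub>\<Gamma>\<^esub> R \<inter> carrier (\<Gamma>s i)" by simp_all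
      then show "dist (f i (g1 \<otimes>\<^bsub>\<Gamma>s i\<^esub> inv\<^bsub>\<Gamma>s i\<^esub> g2)) (f i g1 \<otimes>\<^bsub>\<Gamma>\<^esub> f i (inv\<^bsub>\<Gamma>s i\<^esub> g2)) \<le> \<epsilon>"
        using apx by blast
    next
      fix x assume "dist \<one>\<^bsub>\<Gamma>\<^esub> x < R"
      then have "x \<in> ball \<one>\<^bsub>\<Gamma>\<^esub> R" by simp
      then obtain g where "g \<in> carrier (\<Gamma>s i)" "f i g \<in> ball x \<epsilon>" using dns by blast
      then show "\<exists>g\<in>carrier (\<Gamma>s i). dist x (f i g) < \<epsilon>" by auto
    qed
    have sP: "\<forall>s\<in>S0. \<exists>sc \<rho>c. \<epsilon> < \<rho>c \<and> dist \<one>\<^bsub>\<Gamma>\<^esub> sc < R \<and> ball sc \<rho>c \<subseteq> S0 \<and>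
        (\<forall>y\<in>ball sc \<rho>c. (connected_component_set UNIV \<one>\<^bsub>\<Gamma>\<^esub> #>\<^bsub>\<Gamma>\<^esub> y) = (connected_component_set UNIV \<one>\<^bsub>\<Gamma>\<^esub> #>\<^bsub>\<Gamma>\<^esub> s))"
      by (rule surjP) (use \<epsilon> \<rho>s(1) Rge(4) in linarith)+
    show "let G = generate (\<Gamma>s i) (f i -` ball \<one>\<^bsub>\<Gamma>\<^esub> r \<inter> carrier (\<Gamma>s i)) in
           G \<lhd> \<Gamma>s i \<and>
           (\<exists>h. h \<in> hom (\<Gamma>s i Mod G) (\<Gamma> Mod connected_component_set UNIV \<one>\<^bsub>\<Gamma>\<^esub>) \<and>
                h ` carrier (\<Gamma>s i Mod G) = carrier (\<Gamma> Mod connected_component_set UNIV \<one>\<^bsub>\<Gamma>\<^esub>))"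
      by (rule A.main_at[OF r S SK(2) sP kerP RK(2) \<theta>1(2) R1(2) R1(1) c])
  qed
qed

end
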